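(* Let $A$ be a commutative semiring (not necessarily idempotent). Every finitely presented flat $A$-module is projective.
   Context: Modules over $A$ are commutative monoids with compatible $A$-action; $\otimes_A$ is the tensor product. $M$ is flat if $-\otimes_A M$ is exact (preserves finite limits and finite colimits). $M$ is finitely presented if it is a coequaliser of two homomorphisms between finite free modules $A^k\rightrightarrows A^n$. $M$ is projective if every surjection onto $M$ has a section (equivalently $M$ is a retract of a free module). *)

theory Defs
  imports Main
begin

record ('a, 'm) smod =
  mcarrier :: "'m set"
  mzero :: 'm
  madd :: "'m \<Rightarrow> 'm \<Rightarrow> 'm"
  msmult :: "'a \<Rightarrow> 'm \<Rightarrow> 'm"

definition semimodule :: "('a::comm_semiring_1, 'm) smod \<Rightarrow> bool" where
  "semimodule M \<longleftrightarrow>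
     mzero M \<in> mcarrier M \<and>
     (\<forall>x\<in>mcarrier M. \<forall>y\<in>mcarrier M. madd M x y \<in> mcarrier M) \<and>
     (\<forall>a. \<forall>x\<in>mcarrier M. msmult M a x \<in> mcarrier M) \<and>
     (\<forall>x\<in>mcarrier M. \<forall>y\<in>mcarrier M. \<forall>z\<in>mcarrier M.
        madd M (madd M x y) z = madd M x (madd M y z)) \<and>
     (\<forall>x\<in>mcarrier M. \<forall>y\<in>mcarrier M. madd M x y = madd M y x) \<and>
     (\<forall>x\<in>mcarrier M. madd M (mzero M) x = x) \<and>
     (\<forall>a. \<forall>x\<in>mcarrier M. \<forall>y\<in>mcarrier M.
        msmult M a (madd M x y) = madd M (msmult M a x) (msmult M a y)) \<and>
     (\<forall>a b. \<forall>x\<in>mcarrier M. msmult M (a + b) x = madd M (msmult M a x) (msmult M b x)) \<and>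
     (\<forall>a b. \<forall>x\<in>mcarrier M. msmult M (a * b) x = msmult M a (msmult M b x)) \<and>
     (\<forall>x\<in>mcarrier M. msmult M 1 x = x) \<and>
     (\<forall>x\<in>mcarrier M. msmult M 0 x = mzero M) \<and>
     (\<forall>a. msmult M a (mzero M) = mzero M)"

definition smod_hom :: "('a::comm_semiring_1, 'm) smod \<Rightarrow> ('a, 'n) smod \<Rightarrow> ('m \<Rightarrow> 'n) \<Rightarrow> bool" where
  "smod_hom M N f \<longleftrightarrow>
     (\<forall>x\<in>mcarrier M. f x \<in> mcarrier N) \<and>
     (\<forall>x\<in>mcarrier M. \<forall>y\<in>mcarrier M. f (madd M x y) = madd N (f x) (f y)) \<and>
     f (mzero M) = mzero N \<and>
     (\<forall>a. \<forall>x\<in>mcarrier M. f (msmult M a x) = msmult N a (f x))"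

definition smod_cong :: "('a::comm_semiring_1, 'm) smod \<Rightarrow> ('m \<times> 'm) set \<Rightarrow> bool" where
  "smod_cong M E \<longleftrightarrow> equiv (mcarrier M) E \<and>
     (\<forall>(x, x')\<in>E. \<forall>(y, y')\<in>E. (madd M x y, madd M x' y') \<in> E) \<and>
     (\<forall>a. \<forall>(x, x')\<in>E. (msmult M a x, msmult M a x') \<in> E)"

definition cong_gen :: "('a::comm_semiring_1, 'm) smod \<Rightarrow> ('m \<times> 'm) set \<Rightarrow> ('m \<times> 'm) set" where
  "cong_gen M R = \<Inter> {E. smod_cong M E \<and> R \<subseteq> E}"

definition quot_smod :: "('a::comm_semiring_1, 'm) smod \<Rightarrow> ('m \<times> 'm) set \<Rightarrow> ('a, 'm set) smod" where
  "quot_smod M E = \<lparr> mcarrier = mcarrier M // E,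
     mzero = E `` {mzero M},
     madd = (\<lambda>X Y. E `` {madd M (SOME x. x \<in> X) (SOME y. y \<in> Y)}),
     msmult = (\<lambda>a X. E `` {msmult M a (SOME x. x \<in> X)}) \<rparr>"

definition free_smod :: "'s set \<Rightarrow> ('a::comm_semiring_1, 's \<Rightarrow> 'a) smod" where
  "free_smod S = \<lparr> mcarrier = {\<phi>. finite {s. \<phi> s \<noteq> 0} \<and> (\<forall>s. s \<notin> S \<longrightarrow> \<phi> s = 0)},
     mzero = (\<lambda>_. 0),
     madd = (\<lambda>\<phi> \<psi> s. \<phi> s + \<psi> s),
     msmult = (\<lambda>a \<phi> s. a * \<phi> s) \<rparr>"

definition fin_free :: "nat \<Rightarrow> ('a::comm_semiring_1, nat \<Rightarrow> 'a) smod" where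
  "fin_free n = free_smod {..<n}"

definition sub_smod :: "('a, 'm) smod \<Rightarrow> 'm set \<Rightarrow> ('a, 'm) smod" where
  "sub_smod M S = M\<lparr>mcarrier := S\<rparr>"

definition prod_smod :: "('a, 'm) smod \<Rightarrow> ('a, 'n) smod \<Rightarrow> ('a, 'm \<times> 'n) smod" where
  "prod_smod M N = \<lparr> mcarrier = mcarrier M \<times> mcarrier N,
     mzero = (mzero M, mzero N),
     madd = (\<lambda>(x, y) (x', y'). (madd M x x', madd N y y')),
     msmult = (\<lambda>a (x, y). (msmult M a x, msmult N a y)) \<rparr>"

definition delta :: "'s \<Rightarrow> 's \<Rightarrow> 'a::comm_semiring_1" where
  "delta x = (\<lambda>y. if y = x then 1 else 0)"

definition tensor_rel :: "('a::comm_semiring_1, 'n) smod \<Rightarrow> ('a, 'm) smod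
    \<Rightarrow> (('n \<times> 'm \<Rightarrow> 'a) \<times> ('n \<times> 'm \<Rightarrow> 'a)) set" where
  "tensor_rel N M = (let F = (free_smod (mcarrier N \<times> mcarrier M) :: ('a, 'n \<times> 'm \<Rightarrow> 'a) smod) in
     {(delta (madd N n n', m), madd F (delta (n, m)) (delta (n', m))) | n n' m.
        n \<in> mcarrier N \<and> n' \<in> mcarrier N \<and> m \<in> mcarrier M} \<union>
     {(delta (n, madd M m m'), madd F (delta (n, m)) (delta (n, m'))) | n m m'.
        n \<in> mcarrier N \<and> m \<in> mcarrier M \<and> m' \<in> mcarrier M} \<union>
     {(delta (msmult N a n, m), msmult F a (delta (n, m))) | a n m.
        n \<in> mcarrier N \<and> m \<in> mcarrier M} \<union>
     {(delta (n, msmult M a m), msmult F a (delta (n, m))) | a n m.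
        n \<in> mcarrier N \<and> m \<in> mcarrier M})"

definition tensor_cong :: "('a::comm_semiring_1, 'n) smod \<Rightarrow> ('a, 'm) smod
    \<Rightarrow> (('n \<times> 'm \<Rightarrow> 'a) \<times> ('n \<times> 'm \<Rightarrow> 'a)) set" where
  "tensor_cong N M = cong_gen (free_smod (mcarrier N \<times> mcarrier M)) (tensor_rel N M)"

definition tensor :: "('a::comm_semiring_1, 'n) smod \<Rightarrow> ('a, 'm) smod
    \<Rightarrow> ('a, ('n \<times> 'm \<Rightarrow> 'a) set) smod" where
  "tensor N M = quot_smod (free_smod (mcarrier N \<times> mcarrier M)) (tensor_cong N M)"

definition push :: "('n \<Rightarrow> 'n') \<Rightarrow> ('n \<times> 'm \<Rightarrow> 'a::comm_semiring_1) \<Rightarrow> ('n' \<times> 'm \<Rightarrow> 'a)" where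
  "push f \<phi> = (\<lambda>(n', m). \<Sum>n\<in>{n. f n = n' \<and> \<phi> (n, m) \<noteq> 0}. \<phi> (n, m))"

text \<open>The map f \<otimes> id_M : N \<otimes> M -> N' \<otimes> M induced by f : N -> N'.\<close>
definition tmap :: "('a::comm_semiring_1, 'n') smod \<Rightarrow> ('a, 'm) smod \<Rightarrow> ('n \<Rightarrow> 'n')
    \<Rightarrow> ('n \<times> 'm \<Rightarrow> 'a) set \<Rightarrow> ('n' \<times> 'm \<Rightarrow> 'a) set" where
  "tmap N' M f X = tensor_cong N' M `` {push f (SOME \<phi>. \<phi> \<in> X)}"

text \<open>The functor - \<otimes>_A M preserves finite limits (terminal object, binary
  products, equalisers) and finite colimits (initial object, binary coproducts,
  coequalisers), tested on all modules whose carrier lies in the type 'u.\<close>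
definition tensor_exact :: "'u itself \<Rightarrow> ('a::comm_semiring_1, 'm) smod \<Rightarrow> bool" where
  "tensor_exact (_::'u itself) M \<longleftrightarrow>
    \<comment> \<open>terminal (= initial) object: the zero module\<close>
    (\<forall>N :: ('a, 'u) smod. semimodule N \<and> (\<exists>z. mcarrier N = {z}) \<longrightarrow>
        (\<exists>z. mcarrier (tensor N M) = {z})) \<and>
    \<comment> \<open>binary products\<close>
    (\<forall>(N1 :: ('a, 'u) smod) (N2 :: ('a, 'u) smod). semimodule N1 \<and> semimodule N2 \<longrightarrow>
        bij_betw (\<lambda>z. (tmap N1 M fst z, tmap N2 M snd z))
          (mcarrier (tensor (prod_smod N1 N2) M))
          (mcarrier (tensor N1 M) \<times> mcarrier (tensor N2 M))) \<and>
    \<comment> \<open>binary coproducts\<close>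
    (\<forall>(N1 :: ('a, 'u) smod) (N2 :: ('a, 'u) smod). semimodule N1 \<and> semimodule N2 \<longrightarrow>
        bij_betw (\<lambda>(y1, y2). madd (tensor (prod_smod N1 N2) M)
                     (tmap (prod_smod N1 N2) M (\<lambda>x. (x, mzero N2)) y1)
                     (tmap (prod_smod N1 N2) M (\<lambda>x. (mzero N1, x)) y2))
          (mcarrier (tensor N1 M) \<times> mcarrier (tensor N2 M))
          (mcarrier (tensor (prod_smod N1 N2) M))) \<and>
    \<comment> \<open>equalisers\<close>
    (\<forall>(N1 :: ('a, 'u) smod) (N2 :: ('a, 'u) smod) f g.
        semimodule N1 \<and> semimodule N2 \<and> smod_hom N1 N2 f \<and> smod_hom N1 N2 g \<longrightarrow>
        (let E = sub_smod N1 {x \<in> mcarrier N1. f x = g x} in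
          inj_on (tmap N1 M id) (mcarrier (tensor E M)) \<and>
          tmap N1 M id ` mcarrier (tensor E M) =
            {y \<in> mcarrier (tensor N1 M). tmap N2 M f y = tmap N2 M g y})) \<and>
    \<comment> \<open>coequalisers\<close>
    (\<forall>(N1 :: ('a, 'u) smod) (N2 :: ('a, 'u) smod) f g.
        semimodule N1 \<and> semimodule N2 \<and> smod_hom N1 N2 f \<and> smod_hom N1 N2 g \<longrightarrow>
        (let R = cong_gen N2 {(f x, g x) | x. x \<in> mcarrier N1};
             Q = quot_smod N2 R;
             q = (\<lambda>y. R `` {y}) in
          tmap Q M q ` mcarrier (tensor N2 M) = mcarrier (tensor Q M) \<and>
          {(y, y'). y \<in> mcarrier (tensor N2 M) \<and> y' \<in> mcarrier (tensor N2 M) \<and>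
                    tmap Q M q y = tmap Q M q y'} =
            cong_gen (tensor N2 M)
              {(tmap N2 M f z, tmap N2 M g z) | z. z \<in> mcarrier (tensor N1 M)}))"

definition flat :: "'u itself \<Rightarrow> ('a::comm_semiring_1, 'm) smod \<Rightarrow> bool" where
  "flat U M \<longleftrightarrow> semimodule M \<and> tensor_exact U M"

text \<open>M is a coequaliser of two homomorphisms A^k \<rightrightarrows> A^n: there is a
  surjective hom h : A^n -> M whose kernel congruence is the congruence generated
  by the pairs (f x, g x).\<close>
definition fin_presented :: "('a::comm_semiring_1, 'm) smod \<Rightarrow> bool" where
  "fin_presented M \<longleftrightarrow>
    (\<exists>k n f g h.
       smod_hom (fin_free k) (fin_free n) f \<and> smod_hom (fin_free k) (fin_free n) g \<and>
       smod_hom (fin_free n) M h \<and>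
       h ` mcarrier (fin_free n) = mcarrier M \<and>
       {(x, y). x \<in> mcarrier (fin_free n) \<and> y \<in> mcarrier (fin_free n) \<and> h x = h y} =
         cong_gen (fin_free n) {(f x, g x) | x. x \<in> mcarrier (fin_free k :: ('a, nat \<Rightarrow> 'a) smod)})"

definition projective :: "'v itself \<Rightarrow> ('a::comm_semiring_1, 'm) smod \<Rightarrow> bool" where
  "projective (_::'v itself) M \<longleftrightarrow>
    (\<forall>(P :: ('a, 'v) smod) p. semimodule P \<and> smod_hom P M p \<and> p ` mcarrier P = mcarrier M \<longrightarrow>
       (\<exists>s. smod_hom M P s \<and> (\<forall>x\<in>mcarrier M. p (s x) = x)))"

end

theory Submission
  imports Defs "HOL-Algebra.FiniteProduct" "HOL-Library.Function_Algebras"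
begin

definition smon :: "('a, 'm) smod \<Rightarrow> 'm monoid" where
  "smon M = \<lparr>carrier = mcarrier M, mult = madd M, one = mzero M\<rparr>"

definition msum :: "('a, 'm) smod \<Rightarrow> ('i \<Rightarrow> 'm) \<Rightarrow> 'i set \<Rightarrow> 'm" where
  "msum M g A = finprod (smon M) g A"

lemma smon_simps[simp]: "carrier (smon M) = mcarrier M" "monoid.mult (smon M) = madd M" "monoid.one (smon M) = mzero M"
  by (simp_all add: smon_def)

context
  fixes M :: "('a::comm_semiring_1, 'm) smod"
  assumes sm: "semimodule M"
begin

lemma sm_zero[simp]: "mzero M \<in> mcarrier M"
  using sm unfolding semimodule_def by meson
lemma sm_add[simp]: "x \<in> mcarrier M \<Longrightarrow> y \<in> mcarrier M \<Longrightarrow> madd M x y \<in> mcarrier M"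
  using sm unfolding semimodule_def by meson
lemma sm_smult[simp]: "x \<in> mcarrier M \<Longrightarrow> msmult M a x \<in> mcarrier M"
  using sm unfolding semimodule_def by meson
lemma sm_assoc: "x \<in> mcarrier M \<Longrightarrow> y \<in> mcarrier M \<Longrightarrow> z \<in> mcarrier M \<Longrightarrow>
        madd M (madd M x y) z = madd M x (madd M y z)"
  using sm unfolding semimodule_def by meson
lemma sm_comm: "x \<in> mcarrier M \<Longrightarrow> y \<in> mcarrier M \<Longrightarrow> madd M x y = madd M y x"
  using sm unfolding semimodule_def by meson
lemma sm_lzero[simp]: "x \<in> mcarrier M \<Longrightarrow> madd M (mzero M) x = x"
  using sm unfolding semimodule_def by meson
lemma sm_smult_add: "x \<in> mcarrier M \<Longrightarrow> y \<in> mcarrier M \<Longrightarrow>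
        msmult M a (madd M x y) = madd M (msmult M a x) (msmult M a y)"
  using sm unfolding semimodule_def by meson
lemma sm_add_smult: "x \<in> mcarrier M \<Longrightarrow> msmult M (a + b) x = madd M (msmult M a x) (msmult M b x)"
  using sm unfolding semimodule_def by meson
lemma sm_mult_smult: "x \<in> mcarrier M \<Longrightarrow> msmult M (a * b) x = msmult M a (msmult M b x)"
  using sm unfolding semimodule_def by meson
lemma sm_one[simp]: "x \<in> mcarrier M \<Longrightarrow> msmult M 1 x = x"
  using sm unfolding semimodule_def by meson
lemma sm_zero_smult[simp]: "x \<in> mcarrier M \<Longrightarrow> msmult M 0 x = mzero M"
  using sm unfolding semimodule_def by meson
lemma sm_smult_zero[simp]: "msmult M a (mzero M) = mzero M"
  using sm unfolding semimodule_def by meson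

lemma sm_rzero[simp]: "x \<in> mcarrier M \<Longrightarrow> madd M x (mzero M) = x"
  by (metis sm_comm sm_lzero sm_zero)

lemma comm_monoid_smon: "comm_monoid (smon M)"
  by (rule comm_monoidI) (auto simp: sm_assoc intro: sm_comm)

interpretation S: comm_monoid "smon M" by (rule comm_monoid_smon)

lemma msum_empty[simp]: "msum M g {} = mzero M"
  unfolding msum_def by simp

lemma msum_infinite: "\<not> finite A \<Longrightarrow> msum M g A = mzero M"
  unfolding msum_def by simp

lemma msum_insert:
  "finite A \<Longrightarrow> a \<notin> A \<Longrightarrow> (\<And>x. x \<in> insert a A \<Longrightarrow> g x \<in> mcarrier M) \<Longrightarrow>
   msum M g (insert a A) = madd M (g a) (msum M g A)"
  unfolding msum_def by (subst S.finprod_insert) auto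

lemma msum_closed[simp]: "(\<And>x. x \<in> A \<Longrightarrow> g x \<in> mcarrier M) \<Longrightarrow> msum M g A \<in> mcarrier M"
  unfolding msum_def using S.finprod_closed[of g A] by auto

lemma msum_add:
  "(\<And>x. x \<in> A \<Longrightarrow> f x \<in> mcarrier M) \<Longrightarrow> (\<And>x. x \<in> A \<Longrightarrow> g x \<in> mcarrier M) \<Longrightarrow>
   msum M (\<lambda>x. madd M (f x) (g x)) A = madd M (msum M f A) (msum M g A)"
  unfolding msum_def using S.finprod_multf[of f A g] by auto

lemma msum_cong:
  "A = B \<Longrightarrow> (\<And>x. x \<in> B \<Longrightarrow> f x = g x) \<Longrightarrow> (\<And>x. x \<in> B \<Longrightarrow> g x \<in> mcarrier M) \<Longrightarrow>
   msum M f A = msum M g B"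
  unfolding msum_def by (rule S.finprod_cong') auto

lemma msum_neutral:
  "finite B \<Longrightarrow> A \<subseteq> B \<Longrightarrow> (\<And>x. x \<in> B - A \<Longrightarrow> g x = mzero M) \<Longrightarrow>
   (\<And>x. x \<in> B \<Longrightarrow> g x \<in> mcarrier M) \<Longrightarrow> msum M g A = msum M g B"
  unfolding msum_def by (rule S.finprod_mono_neutral_cong_left) auto

lemma msum_single:
  "finite A \<Longrightarrow> i \<in> A \<Longrightarrow> (\<And>x. x \<in> A \<Longrightarrow> g x \<in> mcarrier M) \<Longrightarrow>
   msum M (\<lambda>j. if j = i then g j else mzero M) A = g i"
proof -
  assume a: "finite A" "i \<in> A" "\<And>x. x \<in> A \<Longrightarrow> g x \<in> mcarrier M"
  have "msum M (\<lambda>j. if j = i then g j else mzero M) A = msum M (\<lambda>j. if j = i then g j else mzero M) {i}"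
    by (rule msum_neutral[symmetric]) (use a in auto)
  also have "\<dots> = g i" using msum_insert[of "{}" i "\<lambda>j. if j = i then g j else mzero M"] a by simp
  finally show ?thesis .
qed

lemma msum_smult:
  "(\<And>x. x \<in> A \<Longrightarrow> g x \<in> mcarrier M) \<Longrightarrow>
   msmult M a (msum M g A) = msum M (\<lambda>x. msmult M a (g x)) A"
proof (induct A rule: infinite_finite_induct)
  case (infinite A) then show ?case by (simp add: msum_infinite)
next
  case empty then show ?case by simp
next
  case (insert x F)
  have "msum M (\<lambda>x. msmult M a (g x)) (insert x F) = madd M (msmult M a (g x)) (msum M (\<lambda>x. msmult M a (g x)) F)"
    by (rule msum_insert) (use insert in auto)
  moreover have "msum M g (insert x F) = madd M (g x) (msum M g F)"
    by (rule msum_insert) (use insert in auto)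
  ultimately show ?case using insert by (simp add: sm_smult_add)
qed

end

context
  fixes N :: "('a::comm_semiring_1, 'n) smod" and M :: "('a, 'm) smod" and h
  assumes smN: "semimodule N" and smM: "semimodule M" and hom: "smod_hom N M h"
begin

lemma hom_msum:
  "(\<And>x. x \<in> A \<Longrightarrow> g x \<in> mcarrier N) \<Longrightarrow> h (msum N g A) = msum M (\<lambda>x. h (g x)) A"
proof (induct A rule: infinite_finite_induct)
  case (infinite A) then show ?case using hom by (simp add: msum_infinite smN smM smod_hom_def)
next
  case empty then show ?case using hom by (simp add: smN smM smod_hom_def)
next
  case (insert x F)
  have "msum M (\<lambda>x. h (g x)) (insert x F) = madd M (h (g x)) (msum M (\<lambda>x. h (g x)) F)"
    by (rule msum_insert) (use insert hom smM in \<open>auto simp: smod_hom_def\<close>)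
  moreover have "msum N g (insert x F) = madd N (g x) (msum N g F)"
    by (rule msum_insert) (use insert smN in auto)
  ultimately show ?case using insert hom smN by (simp add: smod_hom_def)
qed

end

lemma free_simps[simp]:
  "madd (free_smod S :: ('a::comm_semiring_1, 's \<Rightarrow> 'a) smod) = (\<lambda>\<phi> \<psi>. \<phi> + \<psi>)"
  "mzero (free_smod S :: ('a::comm_semiring_1, 's \<Rightarrow> 'a) smod) = 0"
  "msmult (free_smod S :: ('a::comm_semiring_1, 's \<Rightarrow> 'a) smod) = (\<lambda>a \<phi> s. a * \<phi> s)"
  by (auto simp: free_smod_def fun_eq_iff)

lemma free_carrier: "\<phi> \<in> mcarrier (free_smod S) \<longleftrightarrow> finite {s. \<phi> s \<noteq> 0} \<and> (\<forall>s. s \<notin> S \<longrightarrow> \<phi> s = 0)"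
  by (simp add: free_smod_def)

lemma free_add_closed: "\<phi> \<in> mcarrier (free_smod S) \<Longrightarrow> \<psi> \<in> mcarrier (free_smod S) \<Longrightarrow>
   \<phi> + \<psi> \<in> mcarrier (free_smod S)"
  unfolding free_carrier
  by (auto intro: finite_subset[of _ "{s. \<phi> s \<noteq> 0} \<union> {s. \<psi> s \<noteq> 0}"])

lemma free_smult_closed: "\<phi> \<in> mcarrier (free_smod S) \<Longrightarrow> (\<lambda>s. a * \<phi> s) \<in> mcarrier (free_smod S)"
  unfolding free_carrier
  by (auto intro: finite_subset[of _ "{s. \<phi> s \<noteq> 0}"])

lemma free_zero_closed: "(0::'s \<Rightarrow> 'a::comm_semiring_1) \<in> mcarrier (free_smod S)"
  unfolding free_carrier by simp

lemma semimodule_free: "semimodule (free_smod S :: ('a::comm_semiring_1, 's \<Rightarrow> 'a) smod)"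
  unfolding semimodule_def
  by (auto simp: free_add_closed free_smult_closed free_zero_closed fun_eq_iff
      algebra_simps)

lemma msum_free:
  "(\<And>x. x \<in> A \<Longrightarrow> g x \<in> mcarrier (free_smod S)) \<Longrightarrow>
   msum (free_smod S) g A = (\<Sum>x\<in>A. g x)"
proof (induct A rule: infinite_finite_induct)
  case (infinite A) then show ?case by (simp add: msum_infinite semimodule_free)
next
  case empty then show ?case by (simp add: semimodule_free)
next
  case (insert x F)
  have "msum (free_smod S) g (insert x F) = madd (free_smod S) (g x) (msum (free_smod S) g F)"
    by (rule msum_insert) (use insert semimodule_free in auto)
  then show ?case using insert by simp
qed

section \<open>Congruences\<close>

definition mclosed :: "('a::comm_semiring_1, 'm) smod \<Rightarrow> bool" where
  "mclosed M \<longleftrightarrow> mzero M \<in> mcarrier M \<and>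
     (\<forall>x\<in>mcarrier M. \<forall>y\<in>mcarrier M. madd M x y \<in> mcarrier M) \<and>
     (\<forall>a. \<forall>x\<in>mcarrier M. msmult M a x \<in> mcarrier M)"

lemma semimodule_mclosed: "semimodule M \<Longrightarrow> mclosed M"
  unfolding mclosed_def by simp

lemma mclosed_free: "mclosed (free_smod S)"
  using semimodule_free semimodule_mclosed by blast

lemma smod_congI:
  assumes "E \<subseteq> mcarrier M \<times> mcarrier M"
    and "\<And>x. x \<in> mcarrier M \<Longrightarrow> (x, x) \<in> E"
    and "\<And>x y. (x, y) \<in> E \<Longrightarrow> (y, x) \<in> E"
    and "\<And>x y z. (x, y) \<in> E \<Longrightarrow> (y, z) \<in> E \<Longrightarrow> (x, z) \<in> E"
    and "\<And>x x' y y'. (x, x') \<in> E \<Longrightarrow> (y, y') \<in> E \<Longrightarrow> (madd M x y, madd M x' y') \<in> E"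
    and "\<And>a x x'. (x, x') \<in> E \<Longrightarrow> (msmult M a x, msmult M a x') \<in> E"
  shows "smod_cong M E"
proof -
  have "equiv (mcarrier M) E"
  proof (rule equivI)
    show "refl_on (mcarrier M) E" unfolding refl_on_def using assms(2) by blast
    show "sym E" unfolding sym_def using assms(3) by blast
    show "trans E" unfolding trans_def using assms(4) by blast
  qed (rule assms(1))
  moreover have "\<forall>(x, x')\<in>E. \<forall>(y, y')\<in>E. (madd M x y, madd M x' y') \<in> E"
    using assms(5) by fast
  moreover have "\<forall>a. \<forall>(x, x')\<in>E. (msmult M a x, msmult M a x') \<in> E"
    using assms(6) by fast
  ultimately show ?thesis unfolding smod_cong_def by (intro conjI)
qed

lemma smod_cong_equiv: "smod_cong M E \<Longrightarrow> equiv (mcarrier M) E"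
  unfolding smod_cong_def by blast

lemma smod_congD1: "smod_cong M E \<Longrightarrow> E \<subseteq> mcarrier M \<times> mcarrier M"
  using smod_cong_equiv equiv_type by blast
lemma smod_congD2: "smod_cong M E \<Longrightarrow> x \<in> mcarrier M \<Longrightarrow> (x, x) \<in> E"
  using smod_cong_equiv equiv_def refl_onD by metis
lemma smod_congD3: "smod_cong M E \<Longrightarrow> (x, y) \<in> E \<Longrightarrow> (y, x) \<in> E"
  using smod_cong_equiv equiv_def symD by metis
lemma smod_congD4: "smod_cong M E \<Longrightarrow> (x, y) \<in> E \<Longrightarrow> (y, z) \<in> E \<Longrightarrow> (x, z) \<in> E"
  using smod_cong_equiv equiv_def transD by metis
lemma smod_congD5: "smod_cong M E \<Longrightarrow> (x, x') \<in> E \<Longrightarrow> (y, y') \<in> E \<Longrightarrow> (madd M x y, madd M x' y') \<in> E"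
  unfolding smod_cong_def by fast
lemma smod_congD6: "smod_cong M E \<Longrightarrow> (x, x') \<in> E \<Longrightarrow> (msmult M a x, msmult M a x') \<in> E"
  unfolding smod_cong_def by fast

lemma cong_full: "mclosed M \<Longrightarrow> smod_cong M (mcarrier M \<times> mcarrier M)"
  by (rule smod_congI) (auto simp: mclosed_def)

lemma cong_gen_sub: "R \<subseteq> cong_gen M R"
  unfolding cong_gen_def by blast

lemma cong_gen_least: "smod_cong M E \<Longrightarrow> R \<subseteq> E \<Longrightarrow> cong_gen M R \<subseteq> E"
  unfolding cong_gen_def by blast

lemma cong_gen_cong:
  assumes "mclosed M" "R \<subseteq> mcarrier M \<times> mcarrier M"
  shows "smod_cong M (cong_gen M R)"
proof -
  let ?F = "{E. smod_cong M E \<and> R \<subseteq> E}"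
  have ne: "mcarrier M \<times> mcarrier M \<in> ?F"
    using assms cong_full by blast
  have memI: "p \<in> cong_gen M R" if "\<And>E. smod_cong M E \<Longrightarrow> R \<subseteq> E \<Longrightarrow> p \<in> E" for p
    unfolding cong_gen_def using that by blast
  have memD: "p \<in> E" if "p \<in> cong_gen M R" "smod_cong M E" "R \<subseteq> E" for p E
    using that unfolding cong_gen_def by blast
  show ?thesis
  proof (rule smod_congI)
    show "cong_gen M R \<subseteq> mcarrier M \<times> mcarrier M"
      using memD[OF _ cong_full[OF assms(1)] assms(2)] by auto
  next
    fix x assume "x \<in> mcarrier M" then show "(x, x) \<in> cong_gen M R"
      by (intro memI) (rule smod_congD2)
  next
    fix x y assume "(x, y) \<in> cong_gen M R" then show "(y, x) \<in> cong_gen M R"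
      by (intro memI) (rule smod_congD3, assumption, rule memD)
  next
    fix x y z assume a: "(x, y) \<in> cong_gen M R" "(y, z) \<in> cong_gen M R"
    show "(x, z) \<in> cong_gen M R"
    proof (rule memI)
      fix E assume "smod_cong M E" "R \<subseteq> E"
      then show "(x, z) \<in> E" using memD[OF a(1)] memD[OF a(2)] smod_congD4 by metis
    qed
  next
    fix x x' y y' assume a: "(x, x') \<in> cong_gen M R" "(y, y') \<in> cong_gen M R"
    show "(madd M x y, madd M x' y') \<in> cong_gen M R"
    proof (rule memI)
      fix E assume "smod_cong M E" "R \<subseteq> E"
      then show "(madd M x y, madd M x' y') \<in> E" using memD[OF a(1)] memD[OF a(2)] smod_congD5 by metis
    qed
  next
    fix a x x' assume a: "(x, x') \<in> cong_gen M R"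
    show "(msmult M a x, msmult M a x') \<in> cong_gen M R"
    proof (rule memI)
      fix E assume "smod_cong M E" "R \<subseteq> E"
      then show "(msmult M a x, msmult M a x') \<in> E" using memD[OF a(1)] smod_congD6 by metis
    qed
  qed
qed

lemma delta_app: "delta x y = (if y = x then 1 else 0)"
  by (simp add: delta_def)

lemma delta_carrier:
  "x \<in> S \<Longrightarrow> (delta x :: 's \<Rightarrow> 'a::comm_semiring_1) \<in> mcarrier (free_smod S)"
  unfolding free_carrier delta_def
  by (auto intro: finite_subset[of _ "{x}"])

lemma free_sum_closed:
  "(\<And>i. i \<in> I \<Longrightarrow> \<phi> i \<in> mcarrier (free_smod S)) \<Longrightarrow> (\<Sum>i\<in>I. \<phi> i) \<in> mcarrier (free_smod S)"
  by (induct I rule: infinite_finite_induct) (auto simp: free_zero_closed free_add_closed)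

definition supp :: "('s \<Rightarrow> 'a::zero) \<Rightarrow> 's set" where
  "supp \<phi> = {s. \<phi> s \<noteq> 0}"

lemma free_finite_supp: "\<phi> \<in> mcarrier (free_smod S) \<Longrightarrow> finite (supp \<phi>)"
  by (simp add: free_carrier supp_def)

lemma free_supp_sub: "\<phi> \<in> mcarrier (free_smod S) \<Longrightarrow> supp \<phi> \<subseteq> S"
  by (auto simp: free_carrier supp_def)

lemma free_carrierI: "finite (supp \<phi>) \<Longrightarrow> supp \<phi> \<subseteq> S \<Longrightarrow> \<phi> \<in> mcarrier (free_smod S)"
  by (auto simp: free_carrier supp_def)

lemma push_eq:
  assumes "finite D" "{n. \<phi> (n, m) \<noteq> 0} \<subseteq> D"
  shows "push f \<phi> (n', m) = (\<Sum>n\<in>{n\<in>D. f n = n'}. \<phi> (n, m))"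
  unfolding push_def prod.case
  by (rule sum.mono_neutral_left) (use assms in auto)

lemma supp_slice_finite:
  "finite (supp \<phi>) \<Longrightarrow> finite {n. \<phi> (n, m) \<noteq> 0}"
proof -
  assume f: "finite (supp \<phi>)"
  have "{n. \<phi> (n, m) \<noteq> 0} \<subseteq> fst ` supp \<phi>" by (force simp: supp_def)
  then show ?thesis using f finite_subset by blast
qed

lemma push_add:
  assumes "finite (supp \<phi>)" "finite (supp \<psi>)"
  shows "push f (\<phi> + \<psi>) = push f \<phi> + push f \<psi>"
proof (rule ext, clarify)
  fix n' m
  let ?D = "{n. \<phi> (n, m) \<noteq> 0} \<union> {n. \<psi> (n, m) \<noteq> 0}"
  have fD: "finite ?D" using assms by (simp add: supp_slice_finite)
  have "push f (\<phi> + \<psi>) (n', m) = (\<Sum>n\<in>{n\<in>?D. f n = n'}. (\<phi> + \<psi>) (n, m))"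
    by (rule push_eq) (use fD in auto)
  also have "\<dots> = (\<Sum>n\<in>{n\<in>?D. f n = n'}. \<phi> (n, m)) + (\<Sum>n\<in>{n\<in>?D. f n = n'}. \<psi> (n, m))"
    by (simp add: sum.distrib)
  also have "\<dots> = push f \<phi> (n', m) + push f \<psi> (n', m)"
  proof -
    have e1: "push f \<phi> (n', m) = (\<Sum>n\<in>{n\<in>?D. f n = n'}. \<phi> (n, m))"
      by (rule push_eq) (use fD in auto)
    have e2: "push f \<psi> (n', m) = (\<Sum>n\<in>{n\<in>?D. f n = n'}. \<psi> (n, m))"
      by (rule push_eq) (use fD in auto)
    show ?thesis by (simp only: e1 e2)
  qed
  finally show "push f (\<phi> + \<psi>) (n', m) = (push f \<phi> + push f \<psi>) (n', m)" by simp
qed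

lemma push_smult:
  assumes "finite (supp \<phi>)"
  shows "push f (\<lambda>s. a * \<phi> s) = (\<lambda>s. a * push f \<phi> s)"
proof (rule ext, clarify)
  fix n' m
  let ?D = "{n. \<phi> (n, m) \<noteq> 0}"
  have fD: "finite ?D" using assms by (simp add: supp_slice_finite)
  have "push f (\<lambda>s. a * \<phi> s) (n', m) = (\<Sum>n\<in>{n\<in>?D. f n = n'}. a * \<phi> (n, m))"
    by (rule push_eq) (use fD in auto)
  also have "\<dots> = a * push f \<phi> (n', m)"
    by (subst push_eq[where D = ?D]) (use fD in \<open>auto simp: sum_distrib_left\<close>)
  finally show "push f (\<lambda>s. a * \<phi> s) (n', m) = a * push f \<phi> (n', m)" .
qed

lemma push_zero: "push f 0 = 0" "push f (\<lambda>_. 0) = (\<lambda>_. 0)"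
  by (auto simp: push_def fun_eq_iff)

lemma push_delta: "push f (delta (n, m)) = (delta (f n, m) :: _ \<Rightarrow> 'a::comm_semiring_1)"
proof (rule ext, clarify)
  fix n' m'
  show "push f (delta (n, m)) (n', m') = (delta (f n, m) :: _ \<Rightarrow> 'a) (n', m')"
  proof (cases "m' = m \<and> f n = n'")
    case True
    then have "{n0. f n0 = n' \<and> (delta (n, m) :: _ \<Rightarrow> 'a) (n0, m') \<noteq> 0} = {n}"
      by (auto simp: delta_def)
    then show ?thesis using True by (simp add: push_def delta_def)
  next
    case False
    then have "{n0. f n0 = n' \<and> (delta (n, m) :: _ \<Rightarrow> 'a) (n0, m') \<noteq> 0} = {}"
      by (auto simp: delta_def)
    then show ?thesis using False by (auto simp: push_def delta_def)
  qed
qed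

lemma push_id: "push id \<phi> = \<phi>"
proof (rule ext, clarify)
  fix n' m
  show "push id \<phi> (n', m) = \<phi> (n', m)"
  proof (cases "\<phi> (n', m) = 0")
    case True
    then have "{n. id n = n' \<and> \<phi> (n, m) \<noteq> 0} = {}" by auto
    then show ?thesis using True by (simp add: push_def)
  next
    case False
    then have "{n. id n = n' \<and> \<phi> (n, m) \<noteq> 0} = {n'}" by auto
    then show ?thesis by (simp add: push_def)
  qed
qed

lemma push_carrier:
  assumes "\<phi> \<in> mcarrier (free_smod (A \<times> B))" "\<And>n. n \<in> A \<Longrightarrow> f n \<in> A'"
  shows "push f \<phi> \<in> mcarrier (free_smod (A' \<times> B))"
proof (rule free_carrierI)
  have sub: "supp (push f \<phi>) \<subseteq> (\<lambda>(n, m). (f n, m)) ` supp \<phi>"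
  proof
    fix p assume p: "p \<in> supp (push f \<phi>)"
    obtain n' m where pe: "p = (n', m)" by force
    with p have "push f \<phi> (n', m) \<noteq> 0" by (simp add: supp_def)
    have "{n. f n = n' \<and> \<phi> (n, m) \<noteq> 0} \<noteq> {}"
    proof
      assume "{n. f n = n' \<and> \<phi> (n, m) \<noteq> 0} = {}"
      then have "push f \<phi> (n', m) = 0" unfolding push_def prod.case by (metis sum.empty)
      with \<open>push f \<phi> (n', m) \<noteq> 0\<close> show False by simp
    qed
    then obtain n where "f n = n'" "\<phi> (n, m) \<noteq> 0" by blast
    then show "p \<in> (\<lambda>(n, m). (f n, m)) ` supp \<phi>" using pe by (force simp: supp_def)
  qed
  have sub2: "(\<lambda>(n, m). (f n, m)) ` supp \<phi> \<subseteq> A' \<times> B"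
    using free_supp_sub[OF assms(1)] assms(2) by auto
  show "finite (supp (push f \<phi>))"
    by (rule finite_subset[OF sub]) (use free_finite_supp[OF assms(1)] in simp)
  show "supp (push f \<phi>) \<subseteq> A' \<times> B" using sub sub2 by (rule order_trans)
qed

lemma push_sum:
  assumes "\<And>i. i \<in> I \<Longrightarrow> \<phi> i \<in> mcarrier (free_smod S)"
  shows "push f (\<Sum>i\<in>I. \<phi> i) = (\<Sum>i\<in>I. push f (\<phi> i))"
  using assms
proof (induct I rule: infinite_finite_induct)
  case (infinite A) then show ?case by (simp add: push_zero)
next
  case empty then show ?case by (simp add: push_zero)
next
  case (insert x F)
  have "finite (supp (\<phi> x))" using insert free_finite_supp by blast
  moreover have "finite (supp (\<Sum>i\<in>F. \<phi> i))"
    using insert free_finite_supp free_sum_closed by (metis insertCI)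
  ultimately have "push f (\<phi> x + (\<Sum>i\<in>F. \<phi> i)) = push f (\<phi> x) + push f (\<Sum>i\<in>F. \<phi> i)"
    by (rule push_add)
  moreover have IH: "push f (\<Sum>i\<in>F. \<phi> i) = (\<Sum>i\<in>F. push f (\<phi> i))" using insert by blast
  ultimately show ?case by (simp only: sum.insert[OF insert(1,2)])
qed

section \<open>The tensor congruence\<close>

context
  fixes N :: "('a::comm_semiring_1, 'n) smod" and M :: "('a, 'm) smod"
  assumes cN: "mclosed N" and cM: "mclosed M"
begin

lemma cN_zero: "mzero N \<in> mcarrier N" and cN_add: "x \<in> mcarrier N \<Longrightarrow> y \<in> mcarrier N \<Longrightarrow> madd N x y \<in> mcarrier N"
  and cN_smult: "x \<in> mcarrier N \<Longrightarrow> msmult N a x \<in> mcarrier N"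
  using cN unfolding mclosed_def by blast+

lemma cM_zero: "mzero M \<in> mcarrier M" and cM_add: "x \<in> mcarrier M \<Longrightarrow> y \<in> mcarrier M \<Longrightarrow> madd M x y \<in> mcarrier M"
  and cM_smult: "x \<in> mcarrier M \<Longrightarrow> msmult M a x \<in> mcarrier M"
  using cM unfolding mclosed_def by blast+

lemma tensor_rel_sub:
  "tensor_rel N M \<subseteq> mcarrier (free_smod (mcarrier N \<times> mcarrier M)) \<times> mcarrier (free_smod (mcarrier N \<times> mcarrier M))"
proof -
  let ?F = "free_smod (mcarrier N \<times> mcarrier M) :: ('a, 'n \<times> 'm \<Rightarrow> 'a) smod"
  have d: "n \<in> mcarrier N \<Longrightarrow> m \<in> mcarrier M \<Longrightarrow> (delta (n, m) :: _ \<Rightarrow> 'a) \<in> mcarrier ?F" for n m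
    by (rule delta_carrier) simp
  show ?thesis
    unfolding tensor_rel_def Let_def
    by (auto intro!: d free_add_closed free_smult_closed cN_add cM_add cN_smult cM_smult)
qed

lemma TC_cong: "smod_cong (free_smod (mcarrier N \<times> mcarrier M)) (tensor_cong N M)"
  unfolding tensor_cong_def by (rule cong_gen_cong[OF mclosed_free tensor_rel_sub])

lemma TC_rel: "tensor_rel N M \<subseteq> tensor_cong N M"
  unfolding tensor_cong_def by (rule cong_gen_sub)

lemma TC_sub: "(x, y) \<in> tensor_cong N M \<Longrightarrow> x \<in> mcarrier (free_smod (mcarrier N \<times> mcarrier M)) \<and> y \<in> mcarrier (free_smod (mcarrier N \<times> mcarrier M))"
  using smod_congD1[OF TC_cong] by blast

lemma TC_refl: "x \<in> mcarrier (free_smod (mcarrier N \<times> mcarrier M)) \<Longrightarrow> (x, x) \<in> tensor_cong N M"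
  using smod_congD2[OF TC_cong] by blast

lemma TC_sym: "(x, y) \<in> tensor_cong N M \<Longrightarrow> (y, x) \<in> tensor_cong N M"
  using smod_congD3[OF TC_cong] by blast

lemma TC_trans: "(x, y) \<in> tensor_cong N M \<Longrightarrow> (y, z) \<in> tensor_cong N M \<Longrightarrow> (x, z) \<in> tensor_cong N M"
  using smod_congD4[OF TC_cong] by blast

lemma TC_add: "(x, x') \<in> tensor_cong N M \<Longrightarrow> (y, y') \<in> tensor_cong N M \<Longrightarrow> (x + y, x' + y') \<in> tensor_cong N M"
  using smod_congD5[OF TC_cong, of x x' y y'] by simp

lemma TC_smult: "(x, x') \<in> tensor_cong N M \<Longrightarrow> ((\<lambda>s. a * x s), (\<lambda>s. a * x' s)) \<in> tensor_cong N M"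
  using smod_congD6[OF TC_cong, of x x' a] by simp

lemma TC_sum:
  assumes "\<And>i. i \<in> I \<Longrightarrow> (\<phi> i, \<phi>' i) \<in> tensor_cong N M"
  shows "((\<Sum>i\<in>I. \<phi> i), (\<Sum>i\<in>I. \<phi>' i)) \<in> tensor_cong N M"
  using assms
proof (induct I rule: infinite_finite_induct)
  case (infinite A)
  have z: "sum \<phi> A = 0" "sum \<phi>' A = 0" by (rule sum.infinite[OF infinite(1)])+
  show ?case using TC_refl[OF free_zero_closed] by (simp only: z)
next
  case empty then show ?case using TC_refl[OF free_zero_closed] by (simp only: sum.empty)
next
  case (insert x F)
  have "(\<phi> x + sum \<phi> F, \<phi>' x + sum \<phi>' F) \<in> tensor_cong N M"
    by (rule TC_add) (use insert in auto)
  then show ?case by (simp only: sum.insert[OF insert(1,2)])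
qed

lemma T1: "n \<in> mcarrier N \<Longrightarrow> n' \<in> mcarrier N \<Longrightarrow> m \<in> mcarrier M \<Longrightarrow>
  (delta (madd N n n', m), delta (n, m) + delta (n', m)) \<in> tensor_cong N M"
  apply (rule subsetD[OF TC_rel])
  unfolding tensor_rel_def Let_def free_simps by blast

lemma T2: "n \<in> mcarrier N \<Longrightarrow> m \<in> mcarrier M \<Longrightarrow> m' \<in> mcarrier M \<Longrightarrow>
  (delta (n, madd M m m'), delta (n, m) + delta (n, m')) \<in> tensor_cong N M"
  apply (rule subsetD[OF TC_rel])
  unfolding tensor_rel_def Let_def free_simps by blast

lemma T3: "n \<in> mcarrier N \<Longrightarrow> m \<in> mcarrier M \<Longrightarrow>
  (delta (msmult N a n, m), (\<lambda>s. a * delta (n, m) s)) \<in> tensor_cong N M"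
  apply (rule subsetD[OF TC_rel])
  unfolding tensor_rel_def Let_def free_simps by blast

lemma T4: "n \<in> mcarrier N \<Longrightarrow> m \<in> mcarrier M \<Longrightarrow>
  (delta (n, msmult M a m), (\<lambda>s. a * delta (n, m) s)) \<in> tensor_cong N M"
  apply (rule subsetD[OF TC_rel])
  unfolding tensor_rel_def Let_def free_simps by blast

end

lemma TC_least: "smod_cong (free_smod (mcarrier N \<times> mcarrier M)) E \<Longrightarrow> tensor_rel N M \<subseteq> E \<Longrightarrow> tensor_cong N M \<subseteq> E"
  unfolding tensor_cong_def by (rule cong_gen_least)

lemma finite_supp_delta: "finite (supp (delta x :: _ \<Rightarrow> 'a::comm_semiring_1))"
  by (rule finite_subset[of _ "{x}"]) (auto simp: supp_def delta_def)

lemma zero_lam: "(\<lambda>s. (0::'a::comm_semiring_1) * f s) = 0"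
  by (simp add: zero_fun_def)

lemma TC_delta_zeroN:
  fixes N :: "('a::comm_semiring_1, 'n) smod" and M :: "('a, 'm) smod"
  assumes "semimodule N" "mclosed M" "m \<in> mcarrier M"
  shows "(delta (mzero N, m), 0) \<in> tensor_cong N M"
proof -
  have "(delta (msmult N 0 (mzero N), m), (\<lambda>s. (0::'a) * delta (mzero N, m) s)) \<in> tensor_cong N M"
    by (rule T3[OF semimodule_mclosed[OF assms(1)] assms(2) sm_zero[OF assms(1)] assms(3)])
  then show ?thesis using assms(1) by (simp add: zero_fun_def)
qed

lemma TC_delta_zeroM:
  assumes "mclosed N" "semimodule M" "n \<in> mcarrier N"
  shows "(delta (n, mzero M), 0) \<in> tensor_cong N M"
proof -
  have "(delta (n, msmult M 0 (mzero M)), (\<lambda>s. 0 * delta (n, mzero M) s)) \<in> tensor_cong N M"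
    by (rule T4[OF assms(1) semimodule_mclosed[OF assms(2)] assms(3) sm_zero[OF assms(2)]])
  then show ?thesis using assms(2) by (simp add: zero_fun_def)
qed

lemma TC_L1:
  assumes smN: "semimodule N" and cM: "mclosed M" and J: "finite J"
    and w: "\<And>j. j \<in> J \<Longrightarrow> w j \<in> mcarrier N" and x: "x \<in> mcarrier M"
  shows "(delta (msum N (\<lambda>j. msmult N (c j) (w j)) J, x),
          \<Sum>j\<in>J. delta (w j, msmult M (c j) x)) \<in> tensor_cong N M"
  using J w
proof (induct J rule: finite_induct)
  case empty
  show ?case using TC_delta_zeroN[OF smN cM x] by (simp only: msum_empty[OF smN] sum.empty)
next
  case (insert j J)
  note cN = semimodule_mclosed[OF smN]
  have wj: "w j \<in> mcarrier N" using insert by auto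
  have cw: "msmult N (c j) (w j) \<in> mcarrier N" using wj smN by simp
  have ms: "msum N (\<lambda>j. msmult N (c j) (w j)) J \<in> mcarrier N" using insert smN by simp
  have e: "msum N (\<lambda>j. msmult N (c j) (w j)) (insert j J) =
     madd N (msmult N (c j) (w j)) (msum N (\<lambda>j. msmult N (c j) (w j)) J)"
    by (rule msum_insert[OF smN insert(1,2)]) (use insert smN in auto)
  have t1: "(delta (madd N (msmult N (c j) (w j)) (msum N (\<lambda>j. msmult N (c j) (w j)) J), x),
      delta (msmult N (c j) (w j), x) + delta (msum N (\<lambda>j. msmult N (c j) (w j)) J, x)) \<in> tensor_cong N M"
    by (rule T1[OF cN cM cw ms x])
  have t3: "(delta (msmult N (c j) (w j), x), delta (w j, msmult M (c j) x)) \<in> tensor_cong N M"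
    by (rule TC_trans[OF cN cM T3[OF cN cM wj x] TC_sym[OF cN cM T4[OF cN cM wj x]]])
  have ih: "(delta (msum N (\<lambda>j. msmult N (c j) (w j)) J, x), \<Sum>j\<in>J. delta (w j, msmult M (c j) x)) \<in> tensor_cong N M"
    using insert by auto
  have "(delta (msum N (\<lambda>j. msmult N (c j) (w j)) (insert j J), x),
      delta (w j, msmult M (c j) x) + (\<Sum>j\<in>J. delta (w j, msmult M (c j) x))) \<in> tensor_cong N M"
    unfolding e by (rule TC_trans[OF cN cM t1 TC_add[OF cN cM t3 ih]])
  then show ?case by (simp only: sum.insert[OF insert(1,2)])
qed

lemma TC_L2:
  assumes cN: "mclosed N" and smM: "semimodule M" and I: "finite I"
    and x: "\<And>i. i \<in> I \<Longrightarrow> x i \<in> mcarrier M" and w: "w \<in> mcarrier N"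
  shows "((\<Sum>i\<in>I. delta (w, x i)), delta (w, msum M x I)) \<in> tensor_cong N M"
  using I x
proof (induct I rule: finite_induct)
  case empty
  show ?case using TC_sym[OF cN semimodule_mclosed[OF smM] TC_delta_zeroM[OF cN smM w]]
    by (simp only: msum_empty[OF smM] sum.empty)
next
  case (insert i I)
  note cM = semimodule_mclosed[OF smM]
  have xi: "x i \<in> mcarrier M" using insert by auto
  have ms: "msum M x I \<in> mcarrier M" using insert smM by simp
  have e: "msum M x (insert i I) = madd M (x i) (msum M x I)"
    by (rule msum_insert[OF smM insert(1,2)]) (use insert in auto)
  have ih: "((\<Sum>i\<in>I. delta (w, x i)), delta (w, msum M x I)) \<in> tensor_cong N M"
    using insert by auto
  have "(delta (w, x i) + (\<Sum>i\<in>I. delta (w, x i)), delta (w, msum M x (insert i I))) \<in> tensor_cong N M"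
    unfolding e by (rule TC_trans[OF cN cM TC_add[OF cN cM TC_refl[OF cN cM] ih] TC_sym[OF cN cM T2[OF cN cM w xi ms]]])
      (rule delta_carrier, use w xi in simp)
  then show ?case by (simp only: sum.insert[OF insert(1,2)])
qed

lemma tmap_wd:
  fixes N :: "('a::comm_semiring_1, 'n) smod" and N' :: "('a, 'n2) smod" and M :: "('a, 'm) smod"
  assumes cN: "mclosed N" and cN': "mclosed N'" and cM: "mclosed M" and hom: "smod_hom N N' f"
    and rel: "(\<phi>, \<phi>') \<in> tensor_cong N M"
  shows "(push f \<phi>, push f \<phi>') \<in> tensor_cong N' M"
proof -
  let ?C = "mcarrier (free_smod (mcarrier N \<times> mcarrier M)) :: ('n \<times> 'm \<Rightarrow> 'a) set"
  let ?K = "{(\<phi>, \<phi>'). \<phi> \<in> ?C \<and> \<phi>' \<in> ?C \<and> (push f \<phi>, push f \<phi>') \<in> tensor_cong N' M}"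
  have fN: "n \<in> mcarrier N \<Longrightarrow> f n \<in> mcarrier N'" for n using hom by (simp add: smod_hom_def)
  have fadd: "n \<in> mcarrier N \<Longrightarrow> n' \<in> mcarrier N \<Longrightarrow> f (madd N n n') = madd N' (f n) (f n')" for n n'
    using hom by (simp add: smod_hom_def)
  have fsm: "n \<in> mcarrier N \<Longrightarrow> f (msmult N a n) = msmult N' a (f n)" for a n
    using hom by (simp add: smod_hom_def)
  have pc: "\<phi> \<in> ?C \<Longrightarrow> push f \<phi> \<in> mcarrier (free_smod (mcarrier N' \<times> mcarrier M))" for \<phi>
    by (rule push_carrier) (auto intro: fN)
  have fs: "\<phi> \<in> ?C \<Longrightarrow> finite (supp \<phi>)" for \<phi> by (rule free_finite_supp)
  have cong: "smod_cong (free_smod (mcarrier N \<times> mcarrier M)) ?K"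
  proof (rule smod_congI)
    show "?K \<subseteq> ?C \<times> ?C" by auto
  next
    fix x assume "x \<in> ?C" then show "(x, x) \<in> ?K" using TC_refl[OF cN' cM pc] by auto
  next
    fix x y assume "(x, y) \<in> ?K" then show "(y, x) \<in> ?K" using TC_sym[OF cN' cM] by auto
  next
    fix x y z assume "(x, y) \<in> ?K" "(y, z) \<in> ?K" then show "(x, z) \<in> ?K" using TC_trans[OF cN' cM] by auto
  next
    fix x x' y y' assume a: "(x, x') \<in> ?K" "(y, y') \<in> ?K"
    then have c: "x \<in> ?C" "x' \<in> ?C" "y \<in> ?C" "y' \<in> ?C" by auto
    have "(push f x + push f y, push f x' + push f y') \<in> tensor_cong N' M"
      using TC_add[OF cN' cM] a by auto
    then show "(madd (free_smod (mcarrier N \<times> mcarrier M)) x y, madd (free_smod (mcarrier N \<times> mcarrier M)) x' y') \<in> ?K"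
      using c by (simp add: push_add fs free_add_closed)
  next
    fix a x x' assume a: "(x, x') \<in> ?K"
    then have c: "x \<in> ?C" "x' \<in> ?C" by auto
    have "((\<lambda>s. a * push f x s), (\<lambda>s. a * push f x' s)) \<in> tensor_cong N' M"
      using TC_smult[OF cN' cM] a by auto
    then show "(msmult (free_smod (mcarrier N \<times> mcarrier M)) a x, msmult (free_smod (mcarrier N \<times> mcarrier M)) a x') \<in> ?K"
      using c by (simp add: push_smult fs free_smult_closed)
  qed
  have g1: "(delta (madd N n n', m), delta (n, m) + delta (n', m)) \<in> ?K"
    if "n \<in> mcarrier N" "n' \<in> mcarrier N" "m \<in> mcarrier M" for n n' m
  proof -
    have "(delta (madd N n n', m), delta (n, m) + delta (n', m)) \<in> tensor_cong N M"
      by (rule T1[OF cN cM that])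
    moreover have "(push f (delta (madd N n n', m)), push f (delta (n, m) + delta (n', m))) \<in> tensor_cong N' M"
      using T1[OF cN' cM fN[OF that(1)] fN[OF that(2)] that(3)]
      by (simp add: push_add finite_supp_delta push_delta fadd that)
    ultimately show ?thesis using TC_sub[OF cN cM] by blast
  qed
  have g2: "(delta (n, madd M m m'), delta (n, m) + delta (n, m')) \<in> ?K"
    if "n \<in> mcarrier N" "m \<in> mcarrier M" "m' \<in> mcarrier M" for n m m'
  proof -
    have "(delta (n, madd M m m'), delta (n, m) + delta (n, m')) \<in> tensor_cong N M"
      by (rule T2[OF cN cM that])
    moreover have "(push f (delta (n, madd M m m')), push f (delta (n, m) + delta (n, m'))) \<in> tensor_cong N' M"
      using T2[OF cN' cM fN[OF that(1)] that(2,3)]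
      by (simp add: push_add finite_supp_delta push_delta)
    ultimately show ?thesis using TC_sub[OF cN cM] by blast
  qed
  have g3: "(delta (msmult N a n, m), (\<lambda>s. a * delta (n, m) s)) \<in> ?K"
    if "n \<in> mcarrier N" "m \<in> mcarrier M" for a n m
  proof -
    have "(delta (msmult N a n, m), (\<lambda>s. a * delta (n, m) s)) \<in> tensor_cong N M"
      by (rule T3[OF cN cM that])
    moreover have "(push f (delta (msmult N a n, m)), push f (\<lambda>s. a * delta (n, m) s)) \<in> tensor_cong N' M"
      using T3[OF cN' cM fN[OF that(1)] that(2), of a]
      by (simp add: push_smult finite_supp_delta push_delta fsm that)
    ultimately show ?thesis using TC_sub[OF cN cM] by blast
  qed
  have g4: "(delta (n, msmult M a m), (\<lambda>s. a * delta (n, m) s)) \<in> ?K"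
    if "n \<in> mcarrier N" "m \<in> mcarrier M" for a n m
  proof -
    have "(delta (n, msmult M a m), (\<lambda>s. a * delta (n, m) s)) \<in> tensor_cong N M"
      by (rule T4[OF cN cM that])
    moreover have "(push f (delta (n, msmult M a m)), push f (\<lambda>s. a * delta (n, m) s)) \<in> tensor_cong N' M"
      using T4[OF cN' cM fN[OF that(1)] that(2), of a]
      by (simp add: push_smult finite_supp_delta push_delta)
    ultimately show ?thesis using TC_sub[OF cN cM] by blast
  qed
  have "tensor_rel N M \<subseteq> ?K"
    unfolding tensor_rel_def Let_def free_simps using g1 g2 g3 g4 by blast
  then have "tensor_cong N M \<subseteq> ?K"
    by (rule TC_least[OF cong])
  then show ?thesis using rel by blast
qed

lemma sum_fun_app: "(\<Sum>i\<in>A. F i) x = (\<Sum>i\<in>A. (F i x :: 'b::comm_monoid_add))"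
  by (induct A rule: infinite_finite_induct) auto

lemma hom_comp: "smod_hom A B f \<Longrightarrow> smod_hom B C g \<Longrightarrow> smod_hom A C (\<lambda>x. g (f x))"
  unfolding smod_hom_def by auto

lemma msum_zero: "semimodule M \<Longrightarrow> msum M (\<lambda>_. mzero M) A = mzero M"
proof (induct A rule: infinite_finite_induct)
  case (infinite A) then show ?case by (simp add: msum_infinite)
next
  case empty then show ?case by simp
next
  case (insert x F) then show ?case by (subst msum_insert) auto
qed

lemma fin_free_decomp:
  assumes "v \<in> mcarrier (free_smod {..<n})"
  shows "(\<Sum>i<n. (\<lambda>s. v i * delta i s)) = (v :: nat \<Rightarrow> 'a::comm_semiring_1)"
proof
  fix s
  have "(\<Sum>i<n. (\<lambda>s. v i * delta i s)) s = (\<Sum>i<n. v i * delta i s)" by (rule sum_fun_app)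
  also have "\<dots> = (\<Sum>i<n. (if s = i then v s else 0))"
    by (rule sum.cong) (auto simp: delta_def)
  also have "\<dots> = (if s < n then v s else 0)"
    by (simp add: sum.delta)
  also have "\<dots> = v s" using assms by (auto simp: free_carrier)
  finally show "(\<Sum>i<n. (\<lambda>s. v i * delta i s)) s = v s" .
qed

lemma delta_fin_free: "i < n \<Longrightarrow> (delta i :: nat \<Rightarrow> 'a::comm_semiring_1) \<in> mcarrier (free_smod {..<n})"
  by (rule delta_carrier) simp

lemma msum_fin_free_decomp:
  assumes "v \<in> mcarrier (free_smod {..<n})"
  shows "msum (free_smod {..<n}) (\<lambda>i. msmult (free_smod {..<n}) (v i) (delta i)) {..<n} = (v :: nat \<Rightarrow> 'a::comm_semiring_1)"
proof -
  have "msum (free_smod {..<n}) (\<lambda>i. msmult (free_smod {..<n}) (v i) (delta i)) {..<n} = (\<Sum>i<n. (\<lambda>s. v i * delta i s))"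
    by (subst msum_free) (auto intro: free_smult_closed delta_fin_free)
  then show ?thesis using fin_free_decomp[OF assms] by simp
qed

section \<open>Encoding vectors as sets\<close>

definition enc :: "(nat \<Rightarrow> 'a) \<Rightarrow> ('a \<times> 'm \<times> nat) set" where
  "enc \<phi> = {(\<phi> i, undefined, i) | i. True}"

definition dec :: "('a \<times> 'm \<times> nat) set \<Rightarrow> nat \<Rightarrow> 'a" where
  "dec S i = (THE a. (a, undefined, i) \<in> S)"

lemma dec_enc[simp]: "dec (enc \<phi> :: ('a \<times> 'm \<times> nat) set) = \<phi>"
proof
  fix i
  show "dec (enc \<phi> :: ('a \<times> 'm \<times> nat) set) i = \<phi> i"
    unfolding dec_def enc_def by (rule the_equality) auto
qed

lemma enc_inj: "(enc \<phi> :: ('a \<times> 'm \<times> nat) set) = enc \<psi> \<Longrightarrow> \<phi> = \<psi>"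
  by (metis dec_enc)

definition trm :: "('a::comm_semiring_1, nat \<Rightarrow> 'a) smod \<Rightarrow> ('a, ('a \<times> 'm \<times> nat) set) smod" where
  "trm V = \<lparr>mcarrier = enc ` mcarrier V, mzero = enc (mzero V),
     madd = (\<lambda>S T. enc (madd V (dec S) (dec T))), msmult = (\<lambda>a S. enc (msmult V a (dec S)))\<rparr>"

lemma trm_carrier: "mcarrier (trm V) = enc ` mcarrier V"
  and trm_zero: "mzero (trm V) = enc (mzero V)"
  and trm_add: "madd (trm V) (enc \<phi>) (enc \<psi>) = enc (madd V \<phi> \<psi>)"
  and trm_smult: "msmult (trm V) a (enc \<phi>) = enc (msmult V a \<phi>)"
  by (simp_all add: trm_def)

lemma semimodule_trm:
  assumes sm: "semimodule V"
  shows "semimodule (trm V :: ('a::comm_semiring_1, ('a \<times> 'm \<times> nat) set) smod)"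
proof -
  note s = sm_assoc[OF sm] sm_smult_add[OF sm] sm_add_smult[OF sm] sm_mult_smult[OF sm]
  have c: "\<And>x y. x \<in> mcarrier V \<Longrightarrow> y \<in> mcarrier V \<Longrightarrow> (enc (madd V x y) :: ('a \<times> 'm \<times> nat) set) = enc (madd V y x)"
    using sm_comm[OF sm] by metis
  show ?thesis
    unfolding semimodule_def trm_def
    by (auto simp: s sm c)
qed

lemma trm_hom:
  assumes "smod_hom V W f"
  shows "smod_hom (trm V :: ('a::comm_semiring_1, ('a \<times> 'm \<times> nat) set) smod) (trm W :: ('a, ('a \<times> 'm \<times> nat) set) smod)
     (\<lambda>S. enc (f (dec S)))"
  using assms unfolding smod_hom_def trm_def by auto

lemma enc_hom: "smod_hom V (trm V :: ('a::comm_semiring_1, ('a \<times> 'm \<times> nat) set) smod) enc"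
  unfolding smod_hom_def trm_def by auto

section \<open>Evaluation maps out of the tensor product\<close>

definition evalt :: "('a::comm_semiring_1, 'm) smod \<Rightarrow> ('n \<Rightarrow> 'a) \<Rightarrow> ('n \<times> 'm \<Rightarrow> 'a) \<Rightarrow> 'm" where
  "evalt M lam \<phi> = msum M (\<lambda>p. msmult M (\<phi> p * lam (fst p)) (snd p)) (supp \<phi>)"

context
  fixes N :: "('a::comm_semiring_1, 'n) smod" and M :: "('a, 'm) smod" and lam :: "'n \<Rightarrow> 'a"
  assumes cN: "mclosed N" and smM: "semimodule M"
    and lam_add: "\<And>x y. x \<in> mcarrier N \<Longrightarrow> y \<in> mcarrier N \<Longrightarrow> lam (madd N x y) = lam x + lam y"
    and lam_smult: "\<And>a x. x \<in> mcarrier N \<Longrightarrow> lam (msmult N a x) = a * lam x"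
begin

lemma evalt_ext:
  assumes "finite D" "supp \<phi> \<subseteq> D" "D \<subseteq> mcarrier N \<times> mcarrier M"
  shows "evalt M lam \<phi> = msum M (\<lambda>p. msmult M (\<phi> p * lam (fst p)) (snd p)) D"
  unfolding evalt_def
proof (rule msum_neutral[OF smM assms(1,2)])
  fix p assume "p \<in> D - supp \<phi>"
  then show "msmult M (\<phi> p * lam (fst p)) (snd p) = mzero M"
    using assms(3) smM by (auto simp: supp_def)
next
  fix p assume "p \<in> D"
  then show "msmult M (\<phi> p * lam (fst p)) (snd p) \<in> mcarrier M"
    using assms(3) smM by auto
qed

lemma evalt_hom: "smod_hom (free_smod (mcarrier N \<times> mcarrier M)) M (evalt M lam)"
proof -
  let ?C = "mcarrier (free_smod (mcarrier N \<times> mcarrier M)) :: ('n \<times> 'm \<Rightarrow> 'a) set"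
  let ?t = "\<lambda>\<phi> p. msmult M (\<phi> p * lam (fst p)) (snd p)"
  have closed: "\<phi> \<in> ?C \<Longrightarrow> evalt M lam \<phi> \<in> mcarrier M" for \<phi>
  proof -
    assume a: "\<phi> \<in> ?C"
    have "supp \<phi> \<subseteq> mcarrier N \<times> mcarrier M" by (rule free_supp_sub[OF a])
    then show ?thesis unfolding evalt_def using smM by (auto intro!: msum_closed)
  qed
  have add: "evalt M lam (\<phi> + \<psi>) = madd M (evalt M lam \<phi>) (evalt M lam \<psi>)" if "\<phi> \<in> ?C" "\<psi> \<in> ?C" for \<phi> \<psi>
  proof -
    let ?D = "supp \<phi> \<union> supp \<psi>"
    have fD: "finite ?D" using that free_finite_supp by blast
    have sD: "?D \<subseteq> mcarrier N \<times> mcarrier M" using that free_supp_sub by blast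
    have "supp (\<phi> + \<psi>) \<subseteq> ?D" by (auto simp: supp_def)
    then have "evalt M lam (\<phi> + \<psi>) = msum M (?t (\<phi> + \<psi>)) ?D"
      by (intro evalt_ext fD sD)
    also have "\<dots> = msum M (\<lambda>p. madd M (?t \<phi> p) (?t \<psi> p)) ?D"
      by (rule msum_cong[OF smM refl]) (use sD smM in \<open>auto simp: distrib_right sm_add_smult\<close>)
    also have "\<dots> = madd M (msum M (?t \<phi>) ?D) (msum M (?t \<psi>) ?D)"
      by (rule msum_add[OF smM]) (use sD smM in auto)
    also have "\<dots> = madd M (evalt M lam \<phi>) (evalt M lam \<psi>)"
      by (subst (1 2) evalt_ext[OF fD _ sD]) auto
    finally show ?thesis .
  qed
  have smult: "evalt M lam (\<lambda>s. a * \<phi> s) = msmult M a (evalt M lam \<phi>)" if "\<phi> \<in> ?C" for a \<phi>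
  proof -
    have fD: "finite (supp \<phi>)" using that free_finite_supp by blast
    have sD: "supp \<phi> \<subseteq> mcarrier N \<times> mcarrier M" using that free_supp_sub by blast
    have "supp (\<lambda>s. a * \<phi> s) \<subseteq> supp \<phi>" by (auto simp: supp_def)
    then have "evalt M lam (\<lambda>s. a * \<phi> s) = msum M (?t (\<lambda>s. a * \<phi> s)) (supp \<phi>)"
      by (intro evalt_ext fD sD)
    also have "\<dots> = msum M (\<lambda>p. msmult M a (?t \<phi> p)) (supp \<phi>)"
      by (rule msum_cong[OF smM refl]) (use sD smM in \<open>auto simp: mult.assoc sm_mult_smult\<close>)
    also have "\<dots> = msmult M a (evalt M lam \<phi>)"
      unfolding evalt_def by (rule msum_smult[OF smM, symmetric]) (use sD smM in auto)
    finally show ?thesis .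
  qed
  have zero: "evalt M lam 0 = mzero M"
    by (simp add: evalt_def supp_def smM)
  show ?thesis
    unfolding smod_hom_def using closed add smult zero by (simp add: free_add_closed)
qed

lemma evalt_delta:
  assumes "n \<in> mcarrier N" "m \<in> mcarrier M"
  shows "evalt M lam (delta (n, m)) = msmult M (lam n) m"
proof -
  have "supp (delta (n, m) :: _ \<Rightarrow> 'a) = {(n, m)}" by (auto simp: supp_def delta_def)
  then show ?thesis
    unfolding evalt_def using msum_insert[OF smM, of "{}" "(n, m)"] assms smM
    by (simp add: delta_def)
qed

lemma evalt_TC:
  assumes "(\<phi>, \<phi>') \<in> tensor_cong N M"
  shows "evalt M lam \<phi> = evalt M lam \<phi>'"
proof -
  note cM = semimodule_mclosed[OF smM]
  let ?C = "mcarrier (free_smod (mcarrier N \<times> mcarrier M)) :: ('n \<times> 'm \<Rightarrow> 'a) set"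
  let ?K = "{(\<phi>, \<phi>'). \<phi> \<in> ?C \<and> \<phi>' \<in> ?C \<and> evalt M lam \<phi> = evalt M lam \<phi>'}"
  note hom = evalt_hom[unfolded smod_hom_def]
  have cong: "smod_cong (free_smod (mcarrier N \<times> mcarrier M)) ?K"
  proof (rule smod_congI)
    fix x x' y y' assume "(x, x') \<in> ?K" "(y, y') \<in> ?K"
    then show "(madd (free_smod (mcarrier N \<times> mcarrier M)) x y, madd (free_smod (mcarrier N \<times> mcarrier M)) x' y') \<in> ?K"
      using hom mclosed_free[unfolded mclosed_def] by auto
  next
    fix a x x' assume "(x, x') \<in> ?K"
    then show "(msmult (free_smod (mcarrier N \<times> mcarrier M)) a x, msmult (free_smod (mcarrier N \<times> mcarrier M)) a x') \<in> ?K"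
      using hom free_smult_closed by auto
  qed auto
  have dc: "n \<in> mcarrier N \<Longrightarrow> m \<in> mcarrier M \<Longrightarrow> (delta (n, m) :: _ \<Rightarrow> 'a) \<in> ?C" for n m
    by (rule delta_carrier) simp
  have cNa: "n \<in> mcarrier N \<Longrightarrow> n' \<in> mcarrier N \<Longrightarrow> madd N n n' \<in> mcarrier N" for n n'
    using cN by (simp add: mclosed_def)
  have cNs: "n \<in> mcarrier N \<Longrightarrow> msmult N a n \<in> mcarrier N" for a n
    using cN by (simp add: mclosed_def)
  have "tensor_rel N M \<subseteq> ?K"
  proof -
    have g1: "(delta (madd N n n', m), delta (n, m) + delta (n', m)) \<in> ?K"
      if "n \<in> mcarrier N" "n' \<in> mcarrier N" "m \<in> mcarrier M" for n n' m
      using that hom dc cNa evalt_delta lam_add smM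
      by (auto simp: free_add_closed sm_add_smult)
    have g2: "(delta (n, madd M m m'), delta (n, m) + delta (n, m')) \<in> ?K"
      if "n \<in> mcarrier N" "m \<in> mcarrier M" "m' \<in> mcarrier M" for n m m'
      using that hom dc evalt_delta smM
      by (auto simp: free_add_closed sm_smult_add)
    have g3: "(delta (msmult N a n, m), (\<lambda>s. a * delta (n, m) s)) \<in> ?K"
      if "n \<in> mcarrier N" "m \<in> mcarrier M" for a n m
      using that hom dc cNs evalt_delta lam_smult smM
      by (auto simp: free_smult_closed sm_mult_smult)
    have g4: "(delta (n, msmult M a m), (\<lambda>s. a * delta (n, m) s)) \<in> ?K"
      if "n \<in> mcarrier N" "m \<in> mcarrier M" for a n m
      using that hom dc evalt_delta smM
      by (auto simp: free_smult_closed sm_mult_smult[symmetric] mult.commute)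
    show ?thesis unfolding tensor_rel_def Let_def free_simps using g1 g2 g3 g4 by blast
  qed
  then have "tensor_cong N M \<subseteq> ?K" by (rule TC_least[OF cong])
  then show ?thesis using assms by blast
qed

end

lemma sum_delta_fun: "(\<Sum>j<(k::nat). (\<lambda>s. c j * delta j s)) = (\<lambda>s. if s < k then c s else (0::'a::comm_semiring_1))"
proof
  fix s
  have "(\<Sum>j<k. (\<lambda>s. c j * delta j s)) s = (\<Sum>j<k. c j * delta j s)" by (rule sum_fun_app)
  also have "\<dots> = (\<Sum>j<k. (if s = j then c s else 0))"
    by (rule sum.cong) (auto simp: delta_def)
  also have "\<dots> = (if s < k then c s else 0)"
    by (subst sum.delta') auto
  finally show "(\<Sum>j<k. (\<lambda>s. c j * delta j s)) s = (if s < k then c s else 0)" .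
qed

lemma sum_delta_left: "i < (n::nat) \<Longrightarrow> (\<Sum>i'<n. delta i i' * c i') = (c i :: 'a::comm_semiring_1)"
proof -
  assume i: "i < n"
  have "(\<Sum>i'<n. delta i i' * c i') = (\<Sum>i'<n. (if i = i' then c i' else 0))"
    by (rule sum.cong) (auto simp: delta_def)
  also have "\<dots> = c i" using i by (subst sum.delta') auto
  finally show ?thesis .
qed

locale fp =
  fixes M :: "('a::comm_semiring_1, 'm) smod" and k n :: nat
    and f g :: "(nat \<Rightarrow> 'a) \<Rightarrow> nat \<Rightarrow> 'a" and h :: "(nat \<Rightarrow> 'a) \<Rightarrow> 'm"
  assumes smM: "semimodule M"
    and hf0: "smod_hom (fin_free k) (fin_free n) f"
    and hg0: "smod_hom (fin_free k) (fin_free n) g"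
    and hh0: "smod_hom (fin_free n) M h"
    and surj0: "h ` mcarrier (fin_free n) = mcarrier M"
    and ker0: "{(x, y). x \<in> mcarrier (fin_free n) \<and> y \<in> mcarrier (fin_free n) \<and> h x = h y} =
         cong_gen (fin_free n) {(f x, g x) | x. x \<in> mcarrier (fin_free k :: ('a, nat \<Rightarrow> 'a) smod)}"
begin

abbreviation V1 :: "('a, nat \<Rightarrow> 'a) smod" where "V1 \<equiv> free_smod {..<n}"
abbreviation V2 :: "('a, nat \<Rightarrow> 'a) smod" where "V2 \<equiv> free_smod {..<k}"

lemma hf: "smod_hom V2 V1 f" using hf0 by (simp add: fin_free_def)
lemma hg: "smod_hom V2 V1 g" using hg0 by (simp add: fin_free_def)
lemma hh: "smod_hom V1 M h" using hh0 by (simp add: fin_free_def)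
lemma surj: "h ` mcarrier V1 = mcarrier M" using surj0 by (simp add: fin_free_def)
lemma ker: "{(x, y). x \<in> mcarrier V1 \<and> y \<in> mcarrier V1 \<and> h x = h y} =
         cong_gen V1 {(f x, g x) | x. x \<in> mcarrier V2}"
  using ker0 by (simp add: fin_free_def)

lemma h_car: "v \<in> mcarrier V1 \<Longrightarrow> h v \<in> mcarrier M"
  using hh by (simp add: smod_hom_def)

lemma h_add: "v \<in> mcarrier V1 \<Longrightarrow> v' \<in> mcarrier V1 \<Longrightarrow> h (v + v') = madd M (h v) (h v')"
  using hh by (simp add: smod_hom_def)

lemma h_smult: "v \<in> mcarrier V1 \<Longrightarrow> h (\<lambda>s. a * v s) = msmult M a (h v)"
  using hh by (simp add: smod_hom_def)

lemma h_zero: "h 0 = mzero M"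
  using hh by (simp add: smod_hom_def)

lemma h_fg: "x \<in> mcarrier V2 \<Longrightarrow> h (f x) = h (g x)"
proof -
  assume x: "x \<in> mcarrier V2"
  have "(f x, g x) \<in> {(f x, g x) | x. x \<in> mcarrier V2}" using x by blast
  then have "(f x, g x) \<in> cong_gen V1 {(f x, g x) | x. x \<in> mcarrier V2}"
    by (rule subsetD[OF cong_gen_sub])
  then have "(f x, g x) \<in> {(x, y). x \<in> mcarrier V1 \<and> y \<in> mcarrier V1 \<and> h x = h y}"
    by (simp only: ker)
  then show ?thesis by simp
qed

lemma h_decomp:
  assumes v: "v \<in> mcarrier V1"
  shows "h v = msum M (\<lambda>i. msmult M (v i) (h (delta i))) {..<n}"
proof -
  have "h v = h (msum V1 (\<lambda>i. msmult V1 (v i) (delta i)) {..<n})"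
    using msum_fin_free_decomp[OF v] by simp
  also have "\<dots> = msum M (\<lambda>i. h (msmult V1 (v i) (delta i))) {..<n}"
    by (rule hom_msum[OF semimodule_free smM hh]) (auto intro: free_smult_closed delta_fin_free)
  also have "\<dots> = msum M (\<lambda>i. msmult M (v i) (h (delta i))) {..<n}"
    by (rule msum_cong[OF smM refl]) (auto simp: h_smult delta_fin_free h_car smM)
  finally show ?thesis .
qed

lemma q_decomp:
  assumes q: "smod_hom V2 V1 q" and x: "x \<in> mcarrier V2"
  shows "q x i = (\<Sum>j<k. x j * q (delta j) i)"
proof -
  have qc: "q (delta j) \<in> mcarrier V1" if "j < k" for j
  proof -
    have "delta j \<in> mcarrier V2" using that by (rule delta_fin_free)
    then show ?thesis using q by (simp add: smod_hom_def)
  qed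
  have dk: "j < k \<Longrightarrow> delta j \<in> mcarrier V2" for j by (rule delta_fin_free)
  have "q x = q (msum V2 (\<lambda>j. msmult V2 (x j) (delta j)) {..<k})"
    using msum_fin_free_decomp[OF x] by simp
  also have "\<dots> = msum V1 (\<lambda>j. q (msmult V2 (x j) (delta j))) {..<k}"
    by (rule hom_msum[OF semimodule_free semimodule_free q]) (auto intro: free_smult_closed delta_fin_free)
  also have "\<dots> = msum V1 (\<lambda>j. (\<lambda>s. x j * q (delta j) s)) {..<k}"
    by (rule msum_cong[OF semimodule_free refl])
      (use q dk qc in \<open>auto simp: smod_hom_def intro: free_smult_closed\<close>)
  also have "\<dots> = (\<Sum>j<k. (\<lambda>s. x j * q (delta j) s))"
    by (rule msum_free) (use qc in \<open>auto intro: free_smult_closed\<close>)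
  finally show ?thesis by (simp add: sum_fun_app)
qed

definition tp :: "((nat \<Rightarrow> 'a) \<Rightarrow> nat \<Rightarrow> 'a) \<Rightarrow> (nat \<Rightarrow> 'a) \<Rightarrow> nat \<Rightarrow> 'a" where
  "tp q \<phi> = (\<lambda>j. if j < k then (\<Sum>i<n. \<phi> i * q (delta j) i) else 0)"

definition N1 :: "('a, ('a \<times> 'm \<times> nat) set) smod" where "N1 = trm V1"
definition N2 :: "('a, ('a \<times> 'm \<times> nat) set) smod" where "N2 = trm V2"

definition Fq :: "((nat \<Rightarrow> 'a) \<Rightarrow> nat \<Rightarrow> 'a) \<Rightarrow> ('a \<times> 'm \<times> nat) set \<Rightarrow> ('a \<times> 'm \<times> nat) set" where
  "Fq q S = enc (tp q (dec S))"

definition lin :: "(nat \<Rightarrow> 'a) \<Rightarrow> ('a \<times> 'm \<times> nat) set \<Rightarrow> 'a" where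
  "lin v w = (\<Sum>i<n. dec w i * v i)"

definition Xi :: "('a \<times> 'm \<times> nat) set \<times> 'm \<Rightarrow> 'a" where
  "Xi = (\<Sum>i<n. delta (enc (delta i), h (delta i)))"

lemma smN1: "semimodule N1" unfolding N1_def by (rule semimodule_trm[OF semimodule_free])
lemma smN2: "semimodule N2" unfolding N2_def by (rule semimodule_trm[OF semimodule_free])

lemma tp_hom: "smod_hom V1 V2 (tp q)"
proof -
  have car: "(\<lambda>j. if j < k then (\<Sum>i<n. \<phi> i * q (delta j) i) else 0) \<in> mcarrier V2" for \<phi>
    by (rule free_carrierI) (auto simp: supp_def intro: finite_subset[of _ "{..<k}"])
  show ?thesis
    unfolding smod_hom_def
    by (auto simp: car tp_def fun_eq_iff sum.distrib distrib_right sum_distrib_left mult.assoc)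
qed

lemma Fq_hom: "smod_hom N1 N2 (Fq q)"
  unfolding N1_def N2_def Fq_def[abs_def] by (rule trm_hom[OF tp_hom])

lemma N1_car: "mcarrier N1 = enc ` mcarrier V1" by (simp add: N1_def trm_carrier)
lemma N2_car: "mcarrier N2 = enc ` mcarrier V2" by (simp add: N2_def trm_carrier)

lemma lin_add: "lin v (madd N1 x y) = lin v x + lin v y"
  by (simp add: lin_def N1_def trm_def sum.distrib distrib_right)

lemma lin_smult: "lin v (msmult N1 a x) = a * lin v x"
  by (simp add: lin_def N1_def trm_def sum_distrib_left mult.assoc)

lemma lin_enc_delta: "i < n \<Longrightarrow> lin v (enc (delta i)) = v i"
  by (simp add: lin_def sum_delta_left)

lemma Xi_car: "Xi \<in> mcarrier (free_smod (mcarrier N1 \<times> mcarrier M))"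
  unfolding Xi_def
  by (rule free_sum_closed, rule delta_carrier)
     (auto simp: N1_car intro!: h_car delta_fin_free)

lemma evalt_Xi:
  assumes v: "v \<in> mcarrier V1"
  shows "evalt M (lin v) Xi = h v"
proof -
  note eh = evalt_hom[OF semimodule_mclosed[OF smN1] smM lin_add[of v] lin_smult[of v]]
  have dc: "i < n \<Longrightarrow> (delta (enc (delta i), h (delta i)) :: _ \<Rightarrow> 'a) \<in> mcarrier (free_smod (mcarrier N1 \<times> mcarrier M))" for i
    by (rule delta_carrier) (auto simp: N1_car intro!: h_car delta_fin_free)
  have "Xi = msum (free_smod (mcarrier N1 \<times> mcarrier M)) (\<lambda>i. delta (enc (delta i), h (delta i))) {..<n}"
    unfolding Xi_def by (rule msum_free[symmetric]) (use dc in auto)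
  moreover have "evalt M (lin v) (msum (free_smod (mcarrier N1 \<times> mcarrier M)) (\<lambda>i. delta (enc (delta i), h (delta i))) {..<n})
     = msum M (\<lambda>i. evalt M (lin v) (delta (enc (delta i), h (delta i)))) {..<n}"
    by (rule hom_msum[OF semimodule_free smM eh]) (use dc in auto)
  ultimately have "evalt M (lin v) Xi = msum M (\<lambda>i. evalt M (lin v) (delta (enc (delta i), h (delta i)))) {..<n}"
    by simp
  also have "\<dots> = msum M (\<lambda>i. msmult M (v i) (h (delta i))) {..<n}"
    by (rule msum_cong[OF smM refl])
      (auto simp: evalt_delta[OF semimodule_mclosed[OF smN1] smM lin_add[of v] lin_smult[of v]] lin_enc_delta
        N1_car smM h_car delta_fin_free)
  also have "\<dots> = h v" using h_decomp[OF v] by simp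
  finally show ?thesis .
qed

end

context fp
begin

definition tt :: "(('a \<times> 'm \<times> nat) set \<times> 'm \<Rightarrow> 'a) \<Rightarrow> (nat \<Rightarrow> 'a) \<Rightarrow> ('a \<times> 'm \<times> nat) set \<times> 'm \<Rightarrow> 'a" where
  "tt \<psi> v = (\<lambda>p. if p \<in> supp \<psi> then \<psi> p * lin v (fst p) else 0)"

definition uu :: "(('a \<times> 'm \<times> nat) set \<times> 'm \<Rightarrow> 'a) \<Rightarrow> 'm \<Rightarrow> ('a \<times> 'm \<times> nat) set \<times> 'm \<Rightarrow> 'a" where
  "uu \<psi> y = tt \<psi> (SOME v. v \<in> mcarrier V1 \<and> h v = y)"

lemma lin_q:
  assumes q: "smod_hom V2 V1 q" and x: "x \<in> mcarrier V2"
  shows "lin (q x) (enc e) = (\<Sum>j<k. x j * tp q e j)"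
proof -
  have "lin (q x) (enc e) = (\<Sum>i<n. e i * (\<Sum>j<k. x j * q (delta j) i))"
    by (simp add: lin_def q_decomp[OF q x])
  also have "\<dots> = (\<Sum>i<n. \<Sum>j<k. x j * (e i * q (delta j) i))"
    by (simp add: sum_distrib_left mult.left_commute)
  also have "\<dots> = (\<Sum>j<k. \<Sum>i<n. x j * (e i * q (delta j) i))"
    by (rule sum.swap)
  also have "\<dots> = (\<Sum>j<k. x j * tp q e j)"
    by (rule sum.cong) (auto simp: tp_def sum_distrib_left)
  finally show ?thesis .
qed

lemma section_from_psi:
  assumes psi: "\<psi> \<in> mcarrier (free_smod (E \<times> mcarrier M))"
    and E: "E \<subseteq> {x \<in> mcarrier N1. Fq f x = Fq g x}"
    and rel: "(Xi, \<psi>) \<in> tensor_cong N1 M"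
  shows "projective TYPE('v) M"
proof -
  define S where "S = supp \<psi>"
  have fS: "finite S" unfolding S_def using psi by (rule free_finite_supp)
  have sS: "S \<subseteq> E \<times> mcarrier M" unfolding S_def using psi by (rule free_supp_sub)
  have sS1: "S \<subseteq> mcarrier N1 \<times> mcarrier M" using sS E by blast
  have snd_S: "q \<in> S \<Longrightarrow> snd q \<in> mcarrier M" for q using sS by auto
  note cN1 = semimodule_mclosed[OF smN1]
  have eq1: "h v = evalt M (lin v) \<psi>" if v: "v \<in> mcarrier V1" for v
    using evalt_Xi[OF v] evalt_TC[OF cN1 smM lin_add[of v] lin_smult[of v] rel] by simp
  have eq2: "evalt M (lin v) \<psi> = msum M (\<lambda>p. msmult M (tt \<psi> v p) (snd p)) S" for v
    unfolding evalt_def S_def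
    by (rule msum_cong[OF smM refl]) (use sS1 smM in \<open>auto simp: tt_def S_def\<close>)
  have hv: "v \<in> mcarrier V1 \<Longrightarrow> h v = msum M (\<lambda>p. msmult M (tt \<psi> v p) (snd p)) S" for v
    using eq1 eq2 by simp
  have tt_car: "tt \<psi> v \<in> mcarrier (free_smod S)" for v
    by (rule free_carrierI) (auto simp: supp_def tt_def S_def intro: finite_subset[OF _ fS])
  have lin_add_v: "lin (v + v') w = lin v w + lin v' w" for v v' w
    by (simp add: lin_def distrib_left sum.distrib)
  have lin_smult_v: "lin (\<lambda>s. a * v s) w = a * lin v w" for a v w
    by (simp add: lin_def sum_distrib_left mult.left_commute)
  have lin_zero_v: "lin 0 w = 0" for w by (simp add: lin_def)
  have tt_hom: "smod_hom V1 (free_smod S) (tt \<psi>)"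
    unfolding smod_hom_def
    using tt_car[unfolded tt_def] by (auto simp: tt_def fun_eq_iff lin_add_v lin_smult_v lin_zero_v distrib_left mult.left_commute)
  have tt_fg: "tt \<psi> (f x) = tt \<psi> (g x)" if x: "x \<in> mcarrier V2" for x
  proof
    fix p
    show "tt \<psi> (f x) p = tt \<psi> (g x) p"
    proof (cases "p \<in> supp \<psi>")
      case True
      then have "fst p \<in> E" using sS S_def by auto
      then have fp: "fst p \<in> mcarrier N1" "Fq f (fst p) = Fq g (fst p)" using E by auto
      then obtain e where e: "fst p = enc e" "e \<in> mcarrier V1" by (auto simp: N1_car)
      have "tp f e = tp g e" using fp(2) unfolding e Fq_def by (auto dest: enc_inj)
      then have "lin (f x) (fst p) = lin (g x) (fst p)"
        unfolding e by (simp add: lin_q[OF hf x] lin_q[OF hg x])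
      then show ?thesis by (simp add: tt_def)
    next
      case False then show ?thesis by (simp add: tt_def)
    qed
  qed
  have ker_tt: "tt \<psi> v = tt \<psi> v'" if "v \<in> mcarrier V1" "v' \<in> mcarrier V1" "h v = h v'" for v v'
  proof -
    let ?K = "{(v, v'). v \<in> mcarrier V1 \<and> v' \<in> mcarrier V1 \<and> tt \<psi> v = tt \<psi> v'}"
    have cong: "smod_cong V1 ?K"
      by (rule smod_congI) (use tt_hom in \<open>auto simp: smod_hom_def intro: free_add_closed free_smult_closed\<close>)
    have "{(f x, g x) | x. x \<in> mcarrier V2} \<subseteq> ?K"
      using tt_fg hf hg by (auto simp: smod_hom_def)
    then have "cong_gen V1 {(f x, g x) | x. x \<in> mcarrier V2} \<subseteq> ?K"
      by (rule cong_gen_least[OF cong])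
    moreover have "(v, v') \<in> cong_gen V1 {(f x, g x) | x. x \<in> mcarrier V2}"
      using that ker[symmetric] by blast
    ultimately show ?thesis by blast
  qed
  have uu_h: "uu \<psi> (h v) = tt \<psi> v" if v: "v \<in> mcarrier V1" for v
  proof -
    have "\<exists>v0. v0 \<in> mcarrier V1 \<and> h v0 = h v" using v by blast
    then have "(SOME v0. v0 \<in> mcarrier V1 \<and> h v0 = h v) \<in> mcarrier V1 \<and> h (SOME v0. v0 \<in> mcarrier V1 \<and> h v0 = h v) = h v"
      by (rule someI_ex)
    then show ?thesis unfolding uu_def using ker_tt v by blast
  qed
  have onto: "y \<in> mcarrier M \<Longrightarrow> \<exists>v. v \<in> mcarrier V1 \<and> y = h v" for y
    using surj by blast
  have uu_hom: "smod_hom M (free_smod S) (uu \<psi>)"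
  proof -
    have c: "uu \<psi> y \<in> mcarrier (free_smod S)" if "y \<in> mcarrier M" for y
      using onto[OF that] uu_h tt_car by auto
    have a: "uu \<psi> (madd M y y') = uu \<psi> y + uu \<psi> y'" if yy: "y \<in> mcarrier M" "y' \<in> mcarrier M" for y y'
    proof -
      obtain v v' where vv: "v \<in> mcarrier V1" "y = h v" "v' \<in> mcarrier V1" "y' = h v'"
        using onto[OF yy(1)] onto[OF yy(2)] by blast
      then have "madd M y y' = h (v + v')" by (simp add: h_add)
      moreover have "v + v' \<in> mcarrier V1" using vv by (simp add: free_add_closed)
      ultimately show ?thesis using vv uu_h tt_hom by (simp add: smod_hom_def)
    qed
    have z: "uu \<psi> (mzero M) = 0"
    proof -
      have "(0 :: nat \<Rightarrow> 'a) \<in> mcarrier V1" by (rule free_zero_closed)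
      then show ?thesis using uu_h[of 0] h_zero tt_hom by (simp add: smod_hom_def)
    qed
    have s: "uu \<psi> (msmult M a y) = (\<lambda>s. a * uu \<psi> y s)" if yy: "y \<in> mcarrier M" for a y
    proof -
      obtain v where vv: "v \<in> mcarrier V1" "y = h v" using onto[OF yy] by blast
      then have "msmult M a y = h (\<lambda>s. a * v s)" by (simp add: h_smult)
      moreover have "(\<lambda>s. a * v s) \<in> mcarrier V1" using vv by (simp add: free_smult_closed)
      ultimately show ?thesis using vv uu_h tt_hom by (simp add: smod_hom_def)
    qed
    show ?thesis unfolding smod_hom_def using c a z s by simp
  qed
  have zu: "msum M (\<lambda>p. msmult M (uu \<psi> y p) (snd p)) S = y" if yy: "y \<in> mcarrier M" for y
  proof -
    obtain v where vv: "v \<in> mcarrier V1" "y = h v" using onto[OF yy] by blast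
    then show ?thesis using uu_h hv by simp
  qed
  show ?thesis
    unfolding projective_def
  proof (intro allI impI)
    fix P :: "('a, 'v) smod" and pr
    assume "semimodule P \<and> smod_hom P M pr \<and> pr ` mcarrier P = mcarrier M"
    then have smP: "semimodule P" and hp: "smod_hom P M pr" and sp: "pr ` mcarrier P = mcarrier M"
      by auto
    define b where "b q = (SOME b. b \<in> mcarrier P \<and> pr b = snd q)" for q :: "('a \<times> 'm \<times> nat) set \<times> 'm"
    have b: "b q \<in> mcarrier P \<and> pr (b q) = snd q" if "q \<in> S" for q
    proof -
      have "\<exists>b. b \<in> mcarrier P \<and> pr b = snd q" using sp snd_S[OF that] by force
      then show ?thesis unfolding b_def by (rule someI_ex)
    qed
    define w where "w c = msum P (\<lambda>q. msmult P (c q) (b q)) S" for c :: "('a \<times> 'm \<times> nat) set \<times> 'm \<Rightarrow> 'a"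
    have w_hom: "smod_hom (free_smod S) P w"
    proof -
      have c: "w c \<in> mcarrier P" for c unfolding w_def using b smP by (auto intro!: msum_closed)
      have a: "w (c + c') = madd P (w c) (w c')" for c c'
        unfolding w_def
        by (subst msum_add[OF smP, symmetric]) (use b smP in \<open>auto intro!: msum_cong simp: sm_add_smult\<close>)
      have z: "w 0 = mzero P"
      proof -
        have "msum P (\<lambda>q. msmult P (0 q) (b q)) S = msum P (\<lambda>_. mzero P) S"
          by (rule msum_cong[OF smP refl]) (use b smP in auto)
        then show ?thesis unfolding w_def using msum_zero[OF smP] by simp
      qed
      have s: "w (\<lambda>s. a * c s) = msmult P a (w c)" for a c
        unfolding w_def
        by (subst msum_smult[OF smP]) (use b smP in \<open>auto intro!: msum_cong simp: sm_mult_smult\<close>)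
      show ?thesis unfolding smod_hom_def using c a z s by simp
    qed
    have sec_hom: "smod_hom M P (\<lambda>y. w (uu \<psi> y))" by (rule hom_comp[OF uu_hom w_hom])
    have "pr (w (uu \<psi> y)) = y" if y: "y \<in> mcarrier M" for y
    proof -
      have "pr (w (uu \<psi> y)) = msum M (\<lambda>q. pr (msmult P (uu \<psi> y q) (b q))) S"
        unfolding w_def by (rule hom_msum[OF smP smM hp]) (use b smP in auto)
      also have "\<dots> = msum M (\<lambda>q. msmult M (uu \<psi> y q) (snd q)) S"
        by (rule msum_cong[OF smM refl]) (use b hp smM snd_S in \<open>auto simp: smod_hom_def\<close>)
      also have "\<dots> = y" by (rule zu[OF y])
      finally show ?thesis .
    qed
    then show "\<exists>s. smod_hom M P s \<and> (\<forall>x\<in>mcarrier M. pr (s x) = x)"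
      using sec_hom by blast
  qed
qed

end

context fp
begin

lemma tp_delta:
  assumes i: "i < n"
  shows "tp q (delta i) = (\<lambda>j. if j < k then q (delta j) i else 0)"
proof (rule ext)
  fix j
  show "tp q (delta i) j = (if j < k then q (delta j) i else 0)"
    using sum_delta_left[OF i, of "\<lambda>i'. q (delta j) i'"] by (simp add: tp_def)
qed

lemma enc_tp_delta:
  assumes i: "i < n"
  shows "(enc (tp q (delta i)) :: ('a \<times> 'm \<times> nat) set) =
    msum N2 (\<lambda>j. msmult N2 (q (delta j) i) (enc (delta j))) {..<k}"
proof -
  have dk: "j < k \<Longrightarrow> delta j \<in> mcarrier V2" for j by (rule delta_fin_free)
  have "tp q (delta i) = (\<Sum>j<k. (\<lambda>s. q (delta j) i * delta j s))"
    by (simp add: tp_delta[OF i] sum_delta_fun)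
  also have "\<dots> = msum V2 (\<lambda>j. msmult V2 (q (delta j) i) (delta j)) {..<k}"
    by (subst msum_free) (auto intro: free_smult_closed dk)
  finally have "(enc (tp q (delta i)) :: ('a \<times> 'm \<times> nat) set) = enc (msum V2 (\<lambda>j. msmult V2 (q (delta j) i) (delta j)) {..<k})"
    by simp
  also have "\<dots> = msum N2 (\<lambda>j. enc (msmult V2 (q (delta j) i) (delta j))) {..<k}"
    unfolding N2_def by (rule hom_msum[OF semimodule_free semimodule_trm[OF semimodule_free] enc_hom])
      (auto intro: free_smult_closed dk)
  also have "\<dots> = msum N2 (\<lambda>j. msmult N2 (q (delta j) i) (enc (delta j))) {..<k}"
    by (rule msum_cong[OF smN2 refl]) (auto simp: N2_def trm_smult N2_car[unfolded N2_def] dk intro!: imageI free_smult_closed)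
  finally show ?thesis .
qed

lemma push_Fq_Xi:
  assumes q: "smod_hom V2 V1 q"
  shows "(push (Fq q) Xi, \<Sum>j<k. delta (enc (delta j) :: ('a \<times> 'm \<times> nat) set, h (q (delta j))))
     \<in> tensor_cong N2 M"
proof -
  note cN1 = semimodule_mclosed[OF smN1] and cN2 = semimodule_mclosed[OF smN2]
    and cM = semimodule_mclosed[OF smM]
  have dk: "j < k \<Longrightarrow> delta j \<in> mcarrier V2" for j by (rule delta_fin_free)
  have dn: "i < n \<Longrightarrow> delta i \<in> mcarrier V1" for i by (rule delta_fin_free)
  have qc: "j < k \<Longrightarrow> q (delta j) \<in> mcarrier V1" for j using q dk by (simp add: smod_hom_def)
  have ed: "j < k \<Longrightarrow> (enc (delta j) :: ('a \<times> 'm \<times> nat) set) \<in> mcarrier N2" for j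
    using dk by (simp add: N2_car)
  have dc1: "i < n \<Longrightarrow> (delta (enc (delta i), h (delta i)) :: _ \<Rightarrow> 'a) \<in> mcarrier (free_smod (mcarrier N1 \<times> mcarrier M))" for i
    by (rule delta_carrier) (auto simp: N1_car intro!: h_car delta_fin_free)
  have a: "push (Fq q) Xi = (\<Sum>i<n. delta (enc (tp q (delta i)), h (delta i)))"
    unfolding Xi_def by (subst push_sum[OF dc1]) (auto simp: push_delta Fq_def)
  let ?T = "\<lambda>i j. delta (enc (delta j) :: ('a \<times> 'm \<times> nat) set, msmult M (q (delta j) i) (h (delta i)))"
  have b: "(delta (enc (tp q (delta i)), h (delta i)), \<Sum>j<k. ?T i j) \<in> tensor_cong N2 M" if i: "i < n" for i
    unfolding enc_tp_delta[OF i]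
    by (rule TC_L1[OF smN2 cM]) (auto intro: ed h_car dn i)
  have c: "(push (Fq q) Xi, \<Sum>i<n. \<Sum>j<k. ?T i j) \<in> tensor_cong N2 M"
    unfolding a by (rule TC_sum[OF cN2 cM]) (use b in auto)
  have sw: "(\<Sum>i<n. \<Sum>j<k. ?T i j) = (\<Sum>j<k. \<Sum>i<n. ?T i j)" by (rule sum.swap)
  have d: "(\<Sum>i<n. ?T i j, delta (enc (delta j), h (q (delta j)))) \<in> tensor_cong N2 M" if j: "j < k" for j
  proof -
    have "h (q (delta j)) = msum M (\<lambda>i. msmult M (q (delta j) i) (h (delta i))) {..<n}"
      by (rule h_decomp[OF qc[OF j]])
    then show ?thesis
      using TC_L2[OF cN2 smM finite_lessThan, where x="\<lambda>i. msmult M (q (delta j) i) (h (delta i))" and w="enc (delta j)"]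
        ed[OF j] smM h_car dn by auto
  qed
  have e: "(\<Sum>j<k. \<Sum>i<n. ?T i j, \<Sum>j<k. delta (enc (delta j) :: ('a \<times> 'm \<times> nat) set, h (q (delta j)))) \<in> tensor_cong N2 M"
    by (rule TC_sum[OF cN2 cM]) (use d in auto)
  show ?thesis using TC_trans[OF cN2 cM c e[folded sw]] .
qed

definition XX :: "(('a \<times> 'm \<times> nat) set \<times> 'm \<Rightarrow> 'a) set" where
  "XX = tensor_cong N1 M `` {Xi}"

lemma tmap_XX: "tmap N2 M (Fq f) XX = tmap N2 M (Fq g) XX"
proof -
  note cN1 = semimodule_mclosed[OF smN1] and cN2 = semimodule_mclosed[OF smN2]
    and cM = semimodule_mclosed[OF smM]
  define \<phi>0 where "\<phi>0 = (SOME \<phi>. \<phi> \<in> XX)"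
  have "Xi \<in> XX" unfolding XX_def using TC_refl[OF cN1 cM Xi_car] by blast
  then have "\<phi>0 \<in> XX" unfolding \<phi>0_def by (rule someI[of "\<lambda>\<phi>. \<phi> \<in> XX"])
  then have r: "(Xi, \<phi>0) \<in> tensor_cong N1 M" unfolding XX_def by blast
  have pf: "(push (Fq f) Xi, push (Fq f) \<phi>0) \<in> tensor_cong N2 M"
    by (rule tmap_wd[OF cN1 cN2 cM Fq_hom r])
  have pg: "(push (Fq g) Xi, push (Fq g) \<phi>0) \<in> tensor_cong N2 M"
    by (rule tmap_wd[OF cN1 cN2 cM Fq_hom r])
  have Y: "(\<Sum>j<k. delta (enc (delta j) :: ('a \<times> 'm \<times> nat) set, h (f (delta j))))
      = (\<Sum>j<k. delta (enc (delta j) :: ('a \<times> 'm \<times> nat) set, h (g (delta j))))"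
    by (rule sum.cong) (auto simp: h_fg delta_fin_free)
  have A: "(push (Fq f) \<phi>0, \<Sum>j<k. delta (enc (delta j) :: ('a \<times> 'm \<times> nat) set, h (f (delta j)))) \<in> tensor_cong N2 M"
    by (rule TC_trans[OF cN2 cM TC_sym[OF cN2 cM pf] push_Fq_Xi[OF hf]])
  have B: "(\<Sum>j<k. delta (enc (delta j) :: ('a \<times> 'm \<times> nat) set, h (g (delta j))), push (Fq g) \<phi>0) \<in> tensor_cong N2 M"
    by (rule TC_trans[OF cN2 cM TC_sym[OF cN2 cM push_Fq_Xi[OF hg]] pg])
  have "(push (Fq f) \<phi>0, push (Fq g) \<phi>0) \<in> tensor_cong N2 M"
    by (rule TC_trans[OF cN2 cM A B[folded Y]])
  then have "tensor_cong N2 M `` {push (Fq f) \<phi>0} = tensor_cong N2 M `` {push (Fq g) \<phi>0}"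
    by (rule equiv_class_eq[OF smod_cong_equiv[OF TC_cong[OF cN2 cM]]])
  then show ?thesis unfolding tmap_def \<phi>0_def .
qed

lemma fp_projective:
  assumes fl: "flat TYPE(('a \<times> 'm \<times> nat) set) M"
  shows "projective TYPE('v) M"
proof -
  note cN1 = semimodule_mclosed[OF smN1] and cN2 = semimodule_mclosed[OF smN2]
    and cM = semimodule_mclosed[OF smM]
  have c4: "\<forall>(N1 :: ('a, ('a \<times> 'm \<times> nat) set) smod) (N2 :: ('a, ('a \<times> 'm \<times> nat) set) smod) f g.
        semimodule N1 \<and> semimodule N2 \<and> smod_hom N1 N2 f \<and> smod_hom N1 N2 g \<longrightarrow>
        (let E = sub_smod N1 {x \<in> mcarrier N1. f x = g x} in
          inj_on (tmap N1 M id) (mcarrier (tensor E M)) \<and>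
          tmap N1 M id ` mcarrier (tensor E M) =
            {y \<in> mcarrier (tensor N1 M). tmap N2 M f y = tmap N2 M g y})"
    using fl[unfolded flat_def tensor_exact_def, THEN conjunct2, THEN conjunct2, THEN conjunct2,
        THEN conjunct2, THEN conjunct1] .
  define E' where "E' = {x \<in> mcarrier N1. Fq f x = Fq g x}"
  define Em where "Em = sub_smod N1 E'"
  have pre: "semimodule N1 \<and> semimodule N2 \<and> smod_hom N1 N2 (Fq f) \<and> smod_hom N1 N2 (Fq g)"
    using smN1 smN2 Fq_hom by blast
  have c4': "let E = sub_smod N1 {x \<in> mcarrier N1. Fq f x = Fq g x} in
          inj_on (tmap N1 M id) (mcarrier (tensor E M)) \<and>
          tmap N1 M id ` mcarrier (tensor E M) =
            {y \<in> mcarrier (tensor N1 M). tmap N2 M (Fq f) y = tmap N2 M (Fq g) y}"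
    by (rule c4[rule_format, OF pre])
  have eqz: "tmap N1 M id ` mcarrier (tensor Em M) =
            {y \<in> mcarrier (tensor N1 M). tmap N2 M (Fq f) y = tmap N2 M (Fq g) y}"
    using c4' unfolding Let_def Em_def E'_def by (rule conjunct2)
  have "XX \<in> mcarrier (tensor N1 M)"
    unfolding tensor_def quot_smod_def XX_def by (simp add: quotientI Xi_car)
  then have "XX \<in> tmap N1 M id ` mcarrier (tensor Em M)"
    unfolding eqz using tmap_XX by blast
  then obtain W where W: "W \<in> mcarrier (tensor Em M)" and WX: "tmap N1 M id W = XX" by blast
  have EmC: "mcarrier Em = E'" by (simp add: Em_def sub_smod_def)
  have cEm: "mclosed Em"
  proof -
    have hF: "smod_hom N1 N2 (Fq f)" and hG: "smod_hom N1 N2 (Fq g)" by (rule Fq_hom)+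
    show ?thesis
      using hF hG cN1 unfolding mclosed_def Em_def sub_smod_def E'_def smod_hom_def by auto
  qed
  have "W \<in> mcarrier (free_smod (E' \<times> mcarrier M)) // tensor_cong Em M"
    using W unfolding tensor_def quot_smod_def EmC by simp
  then obtain w0 where w0: "W = tensor_cong Em M `` {w0}" "w0 \<in> mcarrier (free_smod (E' \<times> mcarrier M))"
    by (rule quotientE)
  define \<psi> where "\<psi> = (SOME \<psi>. \<psi> \<in> W)"
  have "w0 \<in> W" using w0 TC_refl[OF cEm cM] EmC by auto
  then have "\<psi> \<in> W" unfolding \<psi>_def by (rule someI[of "\<lambda>\<psi>. \<psi> \<in> W"])
  then have "(w0, \<psi>) \<in> tensor_cong Em M" using w0 by blast
  then have psi: "\<psi> \<in> mcarrier (free_smod (E' \<times> mcarrier M))" using TC_sub[OF cEm cM] EmC by auto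
  have E'sub: "E' \<subseteq> mcarrier N1" unfolding E'_def by blast
  have psi1: "\<psi> \<in> mcarrier (free_smod (mcarrier N1 \<times> mcarrier M))"
    using free_finite_supp[OF psi] free_supp_sub[OF psi] E'sub
    by (intro free_carrierI) auto
  have "tensor_cong N1 M `` {\<psi>} = tensor_cong N1 M `` {Xi}"
    using WX unfolding tmap_def XX_def \<psi>_def[symmetric] push_id .
  then have "(Xi, \<psi>) \<in> tensor_cong N1 M"
    by (intro eq_equiv_class[OF sym smod_cong_equiv[OF TC_cong[OF cN1 cM]] psi1])
  show ?thesis
    by (rule section_from_psi[OF psi _ \<open>(Xi, \<psi>) \<in> tensor_cong N1 M\<close>]) (simp add: E'_def)
qed

end

theorem mainTheorem6:
  fixes M :: "('a::comm_semiring_1, 'm) smod"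
  assumes "semimodule M"
    and "fin_presented M"
    and "flat TYPE(('a \<times> 'm \<times> nat) set) M"
  shows "projective TYPE('v) M"
proof -
  obtain k n f g h where
    hf: "smod_hom (fin_free k) (fin_free n) f" and hg: "smod_hom (fin_free k) (fin_free n) g"
    and hh: "smod_hom (fin_free n) M h" and su: "h ` mcarrier (fin_free n) = mcarrier M"
    and ke: "{(x, y). x \<in> mcarrier (fin_free n) \<and> y \<in> mcarrier (fin_free n) \<and> h x = h y} =
         cong_gen (fin_free n) {(f x, g x) | x. x \<in> mcarrier (fin_free k :: ('a, nat \<Rightarrow> 'a) smod)}"
    using assms(2) unfolding fin_presented_def by (elim exE conjE) blast
  interpret fp M k n f g h
    by (rule fp.intro[OF assms(1) hf hg hh su ke])
  show ?thesis by (rule fp_projective[OF assms(3)])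
qed

end
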